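(* Let $I\colon T_{\mathrm{Graph}}\leadsto T$ be an open interpretation, where $T$ is a canonical theory. Let $T'$ be the theory obtained from the disjoint union $T_{\mathrm{Graph}}\cup T$ (with $E$ the predicate symbol of $T_{\mathrm{Graph}}$) by adding the axiom $\forall x\forall y\,(E(x,y)\leftrightarrow I(E)(x,y))$. Let $\mathcal{L}$ be the language of $T'$ and let $\mathcal{F}$ be a family of canonical structures on $\mathcal{L}$ such that $T'=\mathrm{Forb}_{T_{\mathcal L}}(\mathcal F)$. Then $$\chi(I)=\begin{cases}\infty, & \text{if } \mathcal{C}^E_{\mathcal L}\not\subseteq\mathcal{U}_1(\mathcal F),\\ \min\{\ell\in\mathbb{N}_+:\mathcal{T}^E_{\ell,\mathcal L}\subseteq\mathcal U_\ell(\mathcal F)\}, & \text{otherwise},\end{cases}$$ and in the second case the minimum exists (the set is non-empty). Furthermore, if $T$ itself is obtained from a theory $T_{\mathrm{Graph}}\cup T_0$ by adding axioms (so its language contains $E$) and $I$ acts identically on $E$ (i.e. $I(E)(x,y)=E(x,y)$), then the same conclusion holds with $T'$ replaced by $T$ (with $\mathcal L$ the language of $T$ and $\mathcal F$ such that $T=\mathrm{Forb}_{T_{\mathcal L}}(\mathcal F)$).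
   Context: All languages are finite first-order relational languages; each predicate $P$ has arity $k(P)\in\mathbb{N}_+$. Structures are finite and canonical (no predicate holds on a tuple with a repeated entry); $V(M)$ is the vertex set, $(V)_k$ the set of injective maps $[k]\to V$, $R_P(M)\subseteq(V(M))_{k(P)}$ the tuples satisfying $P$, $M|_U$ the induced substructure. Theories are universal and canonical. $T_{\mathcal L}$ is the theory whose models are all canonical structures on $\mathcal L$; for a family $\mathcal F$ of canonical structures on $\mathcal L$, $\mathrm{Forb}_{T_{\mathcal L}}(\mathcal F)$ is the theory whose models are the canonical structures on $\mathcal L$ with no induced substructure isomorphic to a member of $\mathcal F$. $T_1\cup T_2$ denotes the theory over the disjoint union of the languages with the axioms of both. $T_{\mathrm{Graph}}$: language $\{E\}$, $E$ binary, symmetric; models are simple graphs. An open interpretation $I\colon T_{\mathrm{Graph}}\leadsto T$ assigns to $E$ a quantifier-free formula $I(E)(x,y)$ in the language of $T$ such that $T$ proves it symmetric and irreflexive; $I(N)$ is the graph on $V(N)$ with ordered edges the injective pairs satisfying $I(E)$. $\mathcal M_n[T]$: models of $T$ on $n$ vertices up to isomorphism. $T_{n,\ell}$: complete $\ell$-partite graph on $n$ vertices with parts of sizes $\lfloor n/\ell\rfloor$ or $\lceil n/\ell\rceil$; $G\subseteq H$ means an injection $V(G)\to V(H)$ mapping edges to edges. Abstract chromatic number: $\chi(I)=\sup(\{\ell\in\mathbb{N}_+:\forall n\ \exists N\in\mathcal M_n[T],\ T_{n,\ell}\subseteq I(N)\}\cup\{0\})+1$. Split orders: an $\ell$-split order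 over $V$ is $(f,\preceq)$ with $f\colon V\to[\ell]$ and $\preceq$ a reflexive partial order on $V$ such that $v,w$ are comparable iff $f(v)=f(w)$; $\mathcal S_{\ell,V}$ is the set of these, $\mathcal S_{\ell,k}=\mathcal S_{\ell,[k]}$ (for $\ell=1$, elements of $\mathcal S_{1,V}$ are identified with total orders on $V$). For an injection $g\colon W\to V$, $w_1\preceq_g w_2\iff g(w_1)\preceq g(w_2)$. An $\ell$-Ramsey pattern on $\mathcal L$ is a map $Q\colon P\mapsto Q_P\subseteq\mathcal S_{\ell,k(P)}$; $\mathcal P_{\ell,\mathcal L}$ is the set of these. $M$ is $Q$-uniform w.r.t. $(f,\preceq)\in\mathcal S_{\ell,V(M)}$ if $R_P(M)=\{\alpha\in(V(M))_{k(P)}:(f\circ\alpha,\preceq_\alpha)\in Q_P\}$ for all $P\in\mathcal L$. $\mathcal U_\ell(M)$ is the set of $Q\in\mathcal P_{\ell,\mathcal L}$ such that $M$ is $Q$-uniform w.r.t. some $(f,\preceq)\in\mathcal S_{\ell,V(M)}$; $\mathcal U_\ell(\mathcal F)=\bigcup_{M\in\mathcal F}\mathcal U_\ell(M)$. For $E\in\mathcal L$ binary: $\mathcal C^E_{\mathcal L}$ is the set of $Q\in\mathcal P_{1,\mathcal L}$ with $Q_E=\mathcal S_{1,2}$ ($E$-complete patterns); $\mathcal T^E_{\ell,\mathcal L}$ is the set of $Q\in\mathcal P_{\ell,\mathcal L}$ with $Q_E=\{(g,\preceq)\in\mathcal S_{\ell,2}: g\text{ injective}\}$ ($E$-Turán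 patterns). *)

theory Defs
  imports Main "HOL-Library.Extended_Nat"
begin

text \<open>Structures have vertex set a finite subset of nat; a tuple in
  (V)_k is a distinct list of length k over V (index i of the list = element i+1 of [k]).\<close>

record 'p struc =
  verts :: "nat set"
  rels  :: "'p \<Rightarrow> nat list set"

definition lang_ok :: "'p set \<Rightarrow> ('p \<Rightarrow> nat) \<Rightarrow> bool" where
  "lang_ok L k \<longleftrightarrow> finite L \<and> (\<forall>P\<in>L. k P \<ge> 1)"

definition inj_tuples :: "nat set \<Rightarrow> nat \<Rightarrow> nat list set" where
  "inj_tuples V n = {\<alpha>. distinct \<alpha> \<and> length \<alpha> = n \<and> set \<alpha> \<subseteq> V}"

definition canonical :: "'p set \<Rightarrow> ('p \<Rightarrow> nat) \<Rightarrow> 'p struc \<Rightarrow> bool" where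
  "canonical L k M \<longleftrightarrow> finite (verts M) \<and>
     (\<forall>P\<in>L. rels M P \<subseteq> inj_tuples (verts M) (k P)) \<and>
     (\<forall>P. P \<notin> L \<longrightarrow> rels M P = {})"

definition induced :: "'p struc \<Rightarrow> nat set \<Rightarrow> 'p struc" where
  "induced M U = \<lparr>verts = U, rels = (\<lambda>P. {\<alpha> \<in> rels M P. set \<alpha> \<subseteq> U})\<rparr>"

definition iso :: "'p struc \<Rightarrow> 'p struc \<Rightarrow> bool" where
  "iso M N \<longleftrightarrow> (\<exists>h. bij_betw h (verts M) (verts N) \<and>
     (\<forall>P \<alpha>. set \<alpha> \<subseteq> verts M \<longrightarrow> (map h \<alpha> \<in> rels N P \<longleftrightarrow> \<alpha> \<in> rels M P)))"

text \<open>A canonical (universal) theory is represented by its class of finite models: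
  canonical structures, closed under induced substructures and isomorphism.\<close>

definition canon_theory :: "'p set \<Rightarrow> ('p \<Rightarrow> nat) \<Rightarrow> 'p struc set \<Rightarrow> bool" where
  "canon_theory L k Mod \<longleftrightarrow> lang_ok L k \<and>
     (\<forall>M\<in>Mod. canonical L k M) \<and>
     (\<forall>M\<in>Mod. \<forall>U. U \<subseteq> verts M \<longrightarrow> induced M U \<in> Mod) \<and>
     (\<forall>M\<in>Mod. \<forall>N. canonical L k N \<and> iso N M \<longrightarrow> N \<in> Mod)"

definition Forb :: "'p set \<Rightarrow> ('p \<Rightarrow> nat) \<Rightarrow> 'p struc set \<Rightarrow> 'p struc set" where
  "Forb L k F = {M. canonical L k M \<and>
     (\<forall>U. U \<subseteq> verts M \<longrightarrow> (\<forall>G\<in>F. \<not> iso (induced M U) G))}"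

datatype 'p qf = QTrue | QAtom 'p "nat list" | QEq nat nat | QNot "'p qf" | QAnd "'p qf" "'p qf"

fun qf_sat :: "'p struc \<Rightarrow> (nat \<Rightarrow> nat) \<Rightarrow> 'p qf \<Rightarrow> bool" where
  "qf_sat M \<sigma> QTrue = True"
| "qf_sat M \<sigma> (QAtom P vs) = (map \<sigma> vs \<in> rels M P)"
| "qf_sat M \<sigma> (QEq i j) = (\<sigma> i = \<sigma> j)"
| "qf_sat M \<sigma> (QNot \<phi>) = (\<not> qf_sat M \<sigma> \<phi>)"
| "qf_sat M \<sigma> (QAnd \<phi> \<psi>) = (qf_sat M \<sigma> \<phi> \<and> qf_sat M \<sigma> \<psi>)"

fun qf_wf :: "'p set \<Rightarrow> ('p \<Rightarrow> nat) \<Rightarrow> nat \<Rightarrow> 'p qf \<Rightarrow> bool" where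
  "qf_wf L k m QTrue = True"
| "qf_wf L k m (QAtom P vs) = (P \<in> L \<and> length vs = k P \<and> (\<forall>v\<in>set vs. v < m))"
| "qf_wf L k m (QEq i j) = (i < m \<and> j < m)"
| "qf_wf L k m (QNot \<phi>) = qf_wf L k m \<phi>"
| "qf_wf L k m (QAnd \<phi> \<psi>) = (qf_wf L k m \<phi> \<and> qf_wf L k m \<psi>)"

definition asg :: "nat \<Rightarrow> nat \<Rightarrow> nat \<Rightarrow> nat" where
  "asg x y = (\<lambda>i. if i = 0 then x else y)"

text \<open>I(E) = phi(x0,x1) is an open interpretation T_Graph ~> T: T proves phi symmetric and
  irreflexive (for universal T this is equivalent to holding in all finite models).\<close>
definition open_interp :: "'p set \<Rightarrow> ('p \<Rightarrow> nat) \<Rightarrow> 'p struc set \<Rightarrow> 'p qf \<Rightarrow> bool" where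
  "open_interp L k Mod \<phi> \<longleftrightarrow> qf_wf L k 2 \<phi> \<and>
     (\<forall>N\<in>Mod. \<forall>x\<in>verts N. \<forall>y\<in>verts N.
        (qf_sat N (asg x y) \<phi> \<longleftrightarrow> qf_sat N (asg y x) \<phi>) \<and> \<not> qf_sat N (asg x x) \<phi>)"

definition interp_edge :: "'p qf \<Rightarrow> 'p struc \<Rightarrow> nat \<Rightarrow> nat \<Rightarrow> bool" where
  "interp_edge \<phi> N x y \<longleftrightarrow> x \<in> verts N \<and> y \<in> verts N \<and> x \<noteq> y \<and> qf_sat N (asg x y) \<phi>"

section \<open>The theory T' = T_Graph \<union> T + (E <-> I(E)); E is the symbol None\<close>

definition lang' :: "'p set \<Rightarrow> 'p option set" where
  "lang' L = insert None (Some ` L)"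

definition arity' :: "('p \<Rightarrow> nat) \<Rightarrow> 'p option \<Rightarrow> nat" where
  "arity' k = case_option 2 k"

definition reduct :: "'p option struc \<Rightarrow> 'p struc" where
  "reduct N = \<lparr>verts = verts N, rels = (\<lambda>P. rels N (Some P))\<rparr>"

definition Tprime_models :: "'p set \<Rightarrow> ('p \<Rightarrow> nat) \<Rightarrow> 'p struc set \<Rightarrow> 'p qf \<Rightarrow> 'p option struc set" where
  "Tprime_models L k Mod \<phi> = {N. canonical (lang' L) (arity' k) N \<and> reduct N \<in> Mod \<and>
     (\<forall>x y. [x, y] \<in> rels N None \<longrightarrow> [y, x] \<in> rels N None) \<and>
     (\<forall>x\<in>verts N. \<forall>y\<in>verts N. [x, y] \<in> rels N None \<longleftrightarrow> qf_sat (reduct N) (asg x y) \<phi>)}"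

text \<open>Turan graph T_{n,l} on {0..<n}: parts are the residue classes mod l
  (sizes floor(n/l) or ceil(n/l)).\<close>
definition turan_edge :: "nat \<Rightarrow> nat \<Rightarrow> nat \<Rightarrow> nat \<Rightarrow> bool" where
  "turan_edge n l i j \<longleftrightarrow> i < n \<and> j < n \<and> i mod l \<noteq> j mod l"

definition turan_sub :: "nat \<Rightarrow> nat \<Rightarrow> 'p qf \<Rightarrow> 'p struc \<Rightarrow> bool" where
  "turan_sub n l \<phi> N \<longleftrightarrow> (\<exists>g. inj_on g {..<n} \<and> g ` {..<n} \<subseteq> verts N \<and>
     (\<forall>i j. turan_edge n l i j \<longrightarrow> interp_edge \<phi> N (g i) (g j)))"

definition chi :: "'p struc set \<Rightarrow> 'p qf \<Rightarrow> enat" where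
  "chi Mod \<phi> = Sup (enat ` {l. l \<ge> 1 \<and> (\<forall>n. \<exists>N\<in>Mod. card (verts N) = n \<and> turan_sub n l \<phi> N)} \<union> {0}) + 1"

definition split_order :: "nat \<Rightarrow> 'a set \<Rightarrow> ('a \<Rightarrow> nat) \<Rightarrow> ('a \<times> 'a) set \<Rightarrow> bool" where
  "split_order l V f r \<longleftrightarrow> (\<forall>v\<in>V. f v \<in> {1..l}) \<and> r \<subseteq> V \<times> V \<and> refl_on V r \<and> antisym r \<and> trans r \<and>
     (\<forall>v\<in>V. \<forall>w\<in>V. ((v, w) \<in> r \<or> (w, v) \<in> r) \<longleftrightarrow> f v = f w)"

text \<open>S_{l,k}, with [k] represented by {0..<k} and f extended by 0 outside\<close>
definition S :: "nat \<Rightarrow> nat \<Rightarrow> ((nat \<Rightarrow> nat) \<times> (nat \<times> nat) set) set" where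
  "S l k = {(f, r). split_order l {..<k} f r \<and> (\<forall>i. i \<ge> k \<longrightarrow> f i = 0)}"

definition pull :: "(nat \<Rightarrow> nat) \<Rightarrow> (nat \<times> nat) set \<Rightarrow> nat list \<Rightarrow> (nat \<Rightarrow> nat) \<times> (nat \<times> nat) set" where
  "pull f r \<alpha> = ((\<lambda>i. if i < length \<alpha> then f (\<alpha> ! i) else 0),
                 {(i, j). i < length \<alpha> \<and> j < length \<alpha> \<and> (\<alpha> ! i, \<alpha> ! j) \<in> r})"

definition ramsey_patterns :: "nat \<Rightarrow> 'p set \<Rightarrow> ('p \<Rightarrow> nat) \<Rightarrow> ('p \<Rightarrow> ((nat \<Rightarrow> nat) \<times> (nat \<times> nat) set) set) set" where
  "ramsey_patterns l L k = {Q. (\<forall>P\<in>L. Q P \<subseteq> S l (k P)) \<and> (\<forall>P. P \<notin> L \<longrightarrow> Q P = {})}"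

definition uniform :: "'p set \<Rightarrow> ('p \<Rightarrow> nat) \<Rightarrow> 'p struc \<Rightarrow> ('p \<Rightarrow> ((nat \<Rightarrow> nat) \<times> (nat \<times> nat) set) set)
    \<Rightarrow> (nat \<Rightarrow> nat) \<Rightarrow> (nat \<times> nat) set \<Rightarrow> bool" where
  "uniform L k M Q f r \<longleftrightarrow> (\<forall>P\<in>L. rels M P = {\<alpha> \<in> inj_tuples (verts M) (k P). pull f r \<alpha> \<in> Q P})"

definition U :: "nat \<Rightarrow> 'p set \<Rightarrow> ('p \<Rightarrow> nat) \<Rightarrow> 'p struc \<Rightarrow> ('p \<Rightarrow> ((nat \<Rightarrow> nat) \<times> (nat \<times> nat) set) set) set" where
  "U l L k M = {Q \<in> ramsey_patterns l L k. \<exists>f r. split_order l (verts M) f r \<and> uniform L k M Q f r}"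

definition U_fam :: "nat \<Rightarrow> 'p set \<Rightarrow> ('p \<Rightarrow> nat) \<Rightarrow> 'p struc set \<Rightarrow> ('p \<Rightarrow> ((nat \<Rightarrow> nat) \<times> (nat \<times> nat) set) set) set" where
  "U_fam l L k F = (\<Union>M\<in>F. U l L k M)"

definition complete_patterns :: "'p set \<Rightarrow> ('p \<Rightarrow> nat) \<Rightarrow> 'p \<Rightarrow> ('p \<Rightarrow> ((nat \<Rightarrow> nat) \<times> (nat \<times> nat) set) set) set" where
  "complete_patterns L k E = {Q \<in> ramsey_patterns 1 L k. Q E = S 1 2}"

definition turan_patterns :: "nat \<Rightarrow> 'p set \<Rightarrow> ('p \<Rightarrow> nat) \<Rightarrow> 'p \<Rightarrow> ('p \<Rightarrow> ((nat \<Rightarrow> nat) \<times> (nat \<times> nat) set) set) set" where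
  "turan_patterns l L k E = {Q \<in> ramsey_patterns l L k. Q E = {(g, r) \<in> S l 2. inj_on g {..<2}}}"

end

theory Submission
  imports Defs "HOL-Library.Ramsey"
begin

definition gpull :: "(nat \<times> nat) list \<Rightarrow> (nat \<Rightarrow> nat) \<times> (nat \<times> nat) set" where
"gpull \<beta> = ((\<lambda>i. if i < length \<beta> then fst (\<beta>!i) + 1 else 0),
   {(i,j). i < length \<beta> \<and> j < length \<beta> \<and> fst (\<beta>!i) = fst (\<beta>!j) \<and> snd (\<beta>!i) \<le> snd (\<beta>!j)})"

definition gridtuples :: "nat \<Rightarrow> nat \<Rightarrow> nat \<Rightarrow> (nat \<times> nat) list set" where
"gridtuples l m t = {\<beta>. distinct \<beta> \<and> length \<beta> = t \<and> set \<beta> \<subseteq> {..<l} \<times> {..<m}}"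

lemma gpull_S: assumes "\<beta> \<in> gridtuples l m t" shows "gpull \<beta> \<in> S l t"
proof -
  have d: "distinct \<beta>" and len: "length \<beta> = t" and st: "set \<beta> \<subseteq> {..<l} \<times> {..<m}"
    using assms by (auto simp: gridtuples_def)
  have fl: "\<And>i. i < t \<Longrightarrow> fst (\<beta>!i) < l" using st len by (auto dest!: nth_mem)
  have inj: "\<And>x y. x < t \<Longrightarrow> y < t \<Longrightarrow> fst (\<beta>!x) = fst (\<beta>!y) \<Longrightarrow> snd (\<beta>!x) = snd (\<beta>!y) \<Longrightarrow> x = y"
    using d len by (metis nth_eq_iff_index_eq prod_eqI)
  let ?f = "\<lambda>i. if i < length \<beta> then fst (\<beta>!i) + 1 else 0"
  let ?r = "{(i,j). i < length \<beta> \<and> j < length \<beta> \<and> fst (\<beta>!i) = fst (\<beta>!j) \<and> snd (\<beta>!i) \<le> snd (\<beta>!j)}"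
  have "split_order l {..<t} ?f ?r"
    unfolding split_order_def
  proof (intro conjI)
    show "\<forall>v\<in>{..<t}. ?f v \<in> {1..l}" using fl len by (auto simp: Suc_le_eq)
    show "?r \<subseteq> {..<t} \<times> {..<t}" using len by auto
    show "refl_on {..<t} ?r" using len by (auto simp: refl_on_def)
    show "antisym ?r" using inj len by (auto simp: antisym_def)
    show "trans ?r" by (auto simp: trans_def)
    show "\<forall>v\<in>{..<t}. \<forall>w\<in>{..<t}. ((v, w) \<in> ?r \<or> (w, v) \<in> ?r) = (?f v = ?f w)"
      using len by auto
  qed
  moreover have "\<forall>i. i \<ge> t \<longrightarrow> ?f i = 0" using len by auto
  ultimately show ?thesis unfolding S_def gpull_def by simp
qed

lemma strict_nth_less_iff:
  fixes xs :: "nat list"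
  assumes "sorted_wrt (<) xs" "i < length xs" "j < length xs"
  shows "xs!i < xs!j \<longleftrightarrow> i < j"
proof
  assume a: "xs!i < xs!j"
  show "i < j"
  proof (rule ccontr)
    assume "\<not> i < j"
    then consider "i = j" | "j < i" by linarith
    then show False
    proof cases
      case 1 then show False using a by simp
    next
      case 2 then have "xs!j < xs!i" using sorted_wrt_nth_less[OF assms(1) 2 assms(2)] by simp
      then show False using a by simp
    qed
  qed
next
  assume "i < j" then show "xs!i < xs!j" using sorted_wrt_nth_less[OF assms(1) _ assms(3)] by simp
qed

lemma card_less_nth:
  fixes xs :: "nat list"
  assumes "sorted_wrt (<) xs" "i < length xs"
  shows "card {y \<in> set xs. y < xs!i} = i"
proof -
  have "{y \<in> set xs. y < xs!i} = (\<lambda>j. xs!j) ` {..<i}"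
  proof
    show "{y \<in> set xs. y < xs!i} \<subseteq> (\<lambda>j. xs!j) ` {..<i}"
    proof
      fix y assume "y \<in> {y \<in> set xs. y < xs!i}"
      then obtain j where j: "j < length xs" "y = xs!j" "xs!j < xs!i" by (auto simp: in_set_conv_nth)
      then have "j < i" using strict_nth_less_iff[OF assms(1) j(1) assms(2)] by simp
      then show "y \<in> (\<lambda>j. xs!j) ` {..<i}" using j by auto
    qed
    show "(\<lambda>j. xs!j) ` {..<i} \<subseteq> {y \<in> set xs. y < xs!i}"
      using assms strict_nth_less_iff[OF assms(1)] by auto
  qed
  moreover have "inj_on (\<lambda>j. xs!j) {..<i}" using assms
    by (auto simp: inj_on_def strict_sorted_iff nth_eq_iff_index_eq)
  ultimately show ?thesis by (simp add: card_image)
qed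

lemma sorted_rank:
  fixes S :: "nat set"
  assumes "finite S" "x \<in> S"
  shows "sorted_list_of_set S ! card {y\<in>S. y < x} = x"
proof -
  let ?xs = "sorted_list_of_set S"
  have ss: "sorted_wrt (<) ?xs" using assms(1) by simp
  have st: "set ?xs = S" using assms by simp
  obtain i where i: "i < length ?xs" "?xs!i = x" using assms st by (metis in_set_conv_nth)
  have "card {y\<in>S. y < x} = i" using card_less_nth[OF ss i(1)] st i(2) by simp
  thus ?thesis using i by simp
qed

lemma divmod_inj:
  fixes a c a' c' m :: nat
  assumes "c < m" "c' < m" "a*m + c = a'*m + c'"
  shows "a = a' \<and> c = c'"
proof -
  have "c = (a*m+c) mod m" using assms(1) by simp
  also have "\<dots> = (a'*m+c') mod m" using assms(3) by simp
  also have "\<dots> = c'" using assms(2) by simp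
  finally have 1: "c = c'" .
  have "a = (a*m+c) div m" using assms(1) by simp
  also have "\<dots> = (a'*m+c') div m" using assms(3) by simp
  also have "\<dots> = a'" using assms(2) by simp
  finally show ?thesis using 1 by simp
qed

lemma lex_less:
  fixes c c' s s' m :: nat
  assumes "s < m" "s' < m"
  shows "c'*m + s' < c*m + s \<longleftrightarrow> c' < c \<or> (c' = c \<and> s' < s)"
proof (cases "c' < c")
  case True
  have "c'*m + s' < Suc c' * m" using assms by simp
  also have "\<dots> \<le> c * m" using True by (intro mult_le_mono1) simp
  finally show ?thesis using True by simp
next
  case False
  show ?thesis
  proof (cases "c' = c")
    case True then show ?thesis by simp
  next
    case False
    then have "c < c'" using \<open>\<not> c' < c\<close> by simp
    have "c*m + s < Suc c * m" using assms by simp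
    also have "\<dots> \<le> c' * m" using \<open>c < c'\<close> by (intro mult_le_mono1) simp
    finally show ?thesis using \<open>c < c'\<close> by simp
  qed
qed

lemma grid_idx_lt:
  fixes c s l m :: nat
  assumes "c < l" "s < m" shows "c*m + s < l*m"
proof -
  have "c*m + s < Suc c * m" using assms by simp
  also have "\<dots> \<le> l * m" using assms by (intro mult_le_mono1) simp
  finally show ?thesis .
qed


lemma ramsey_grid:
  assumes lk: "lang_ok L k"
  shows "\<exists>R. \<forall>(N::'p struc) (e::nat \<Rightarrow> nat \<Rightarrow> nat).
     (\<exists>Q\<in>ramsey_patterns l L k. \<exists>\<sigma>. (\<forall>c<l. \<forall>s<m. \<sigma> c s < R) \<and>
        inj_on (\<lambda>q. \<sigma> (fst q) (snd q)) ({..<l} \<times> {..<m}) \<and>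
        (\<forall>P\<in>L. \<forall>\<beta>\<in>gridtuples l m (k P).
            map (\<lambda>q. e (fst q) (\<sigma> (fst q) (snd q))) \<beta> \<in> rels N P \<longleftrightarrow> gpull \<beta> \<in> Q P))"
proof -
  define D where "D = Max (insert 0 (k ` L))"
  have finL: "finite L" using lk by (simp add: lang_ok_def)
  have kD: "\<And>P. P \<in> L \<Longrightarrow> k P \<le> D" using finL by (simp add: D_def)
  define A where "A = {p :: (nat\<times>nat) list. set p \<subseteq> {..<l} \<times> {..<D} \<and> length p \<le> D}"
  define Uc where "Uc = L \<times> A"
  have finA: "finite A" unfolding A_def by (rule finite_lists_length_le) simp
  have finUc: "finite Uc" using finL finA by (simp add: Uc_def)
  define C where "C = card (Pow Uc)"
  obtain enc where enc: "bij_betw enc (Pow Uc) {..<C}"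
    using ex_bij_betw_finite_nat[of "Pow Uc"] finUc C_def by (auto simp: atLeast0LessThan)
  have encinj: "inj_on enc (Pow Uc)" using enc by (simp add: bij_betw_def)
  define M where "M = l*m + D"
  obtain R :: nat where R: "partn_lst {..<R} (replicate C M) D" using ramsey_full[of "replicate C M" D] by blast
  show ?thesis
  proof (rule exI[of _ R], intro allI)
    fix N :: "'p struc" and e :: "nat \<Rightarrow> nat \<Rightarrow> nat"
    define col where "col S = {(P,p) \<in> Uc. length p = k P \<and>
        map (\<lambda>q. e (fst q) (sorted_list_of_set S ! snd q)) p \<in> rels N P}" for S
    define fcol where "fcol S = enc (col S)" for S
    have colU: "col S \<in> Pow Uc" for S by (auto simp: col_def)
    have fc: "fcol \<in> nsets {..<R} D \<rightarrow> {..<length (replicate C M)}"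
      using enc colU by (auto simp: fcol_def bij_betw_def)
    obtain i H where i: "i < length (replicate C M)" and H: "H \<in> nsets {..<R} (replicate C M ! i)"
      and hom: "fcol ` nsets H D \<subseteq> {i}"
      using partn_lstE[OF R fc refl] by blast
    have Hfin: "finite H" "card H = M" "H \<subseteq> {..<R}" using H i by (auto simp: nsets_def)
    have homc: "col S1 = col S2" if "S1 \<in> nsets H D" "S2 \<in> nsets H D" for S1 S2
    proof -
      have "fcol S1 = fcol S2" using hom that by blast
      then show ?thesis using encinj colU by (auto simp: fcol_def inj_on_def)
    qed
    define xs where "xs = sorted_list_of_set H"
    have xss: "sorted_wrt (<) xs" "length xs = M" "set xs = H" using Hfin by (auto simp: xs_def)
    have xsd: "distinct xs" using xss by (simp add: strict_sorted_iff)
    define idx where "idx q = fst q * m + snd q" for q :: "nat\<times>nat"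
    define \<sigma> where "\<sigma> c s = xs ! (c*m+s)" for c s
    define h where "h q = e (fst q) (\<sigma> (fst q) (snd q))" for q
    have idx_lt: "idx q < l*m" if "q \<in> {..<l} \<times> {..<m}" for q
      using that grid_idx_lt[of "fst q" l "snd q" m] by (auto simp: idx_def)
    have idx_inj: "inj_on idx ({..<l} \<times> {..<m})"
    proof (rule inj_onI)
      fix q q' assume qq: "q \<in> {..<l} \<times> {..<m}" "q' \<in> {..<l} \<times> {..<m}" "idx q = idx q'"
      then have "fst q = fst q' \<and> snd q = snd q'"
        using divmod_inj[of "snd q" m "snd q'" "fst q" "fst q'"] by (auto simp: idx_def)
      then show "q = q'" by (simp add: prod_eq_iff)
    qed
    have lmM: "l*m \<le> M" by (simp add: M_def)
    have xsidx_inj: "inj_on (\<lambda>q. xs ! idx q) ({..<l} \<times> {..<m})"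
    proof (rule inj_onI)
      fix q q' assume qq: "q \<in> {..<l} \<times> {..<m}" "q' \<in> {..<l} \<times> {..<m}" "xs ! idx q = xs ! idx q'"
      then have "idx q = idx q'" using xsd xss idx_lt[OF qq(1)] idx_lt[OF qq(2)] lmM
        by (simp add: nth_eq_iff_index_eq)
      then show "q = q'" using idx_inj qq by (auto simp: inj_on_def)
    qed
    have \<sigma>R: "\<forall>c<l. \<forall>s<m. \<sigma> c s < R"
    proof (intro allI impI)
      fix c s assume "c < l" "s < m"
      then have "c*m+s < M" using grid_idx_lt[of c l s m] lmM by simp
      then have "\<sigma> c s \<in> H" using xss by (auto simp: \<sigma>_def)
      then show "\<sigma> c s < R" using Hfin by auto
    qed
    have \<sigma>inj: "inj_on (\<lambda>q. \<sigma> (fst q) (snd q)) ({..<l} \<times> {..<m})"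
      using xsidx_inj by (simp add: \<sigma>_def idx_def)
    define Sb where "Sb \<beta> = (\<lambda>q. xs ! idx q) ` set \<beta> \<union> (\<lambda>j. xs ! (l*m + j)) ` {..<D - length \<beta>}"
      for \<beta> :: "(nat \<times> nat) list"
    define pb where "pb \<beta> = map (\<lambda>q. (fst q, card {q' \<in> set \<beta>. idx q' < idx q})) \<beta>"
      for \<beta> :: "(nat \<times> nat) list"
    have key: "map h \<beta> \<in> rels N P \<longleftrightarrow> (P, pb \<beta>) \<in> col (Sb \<beta>)"
      and SbH: "Sb \<beta> \<in> nsets H D"
      if P: "P \<in> L" and \<beta>: "\<beta> \<in> gridtuples l m (k P)" for P \<beta>
    proof -
      have d: "distinct \<beta>" and len: "length \<beta> = k P" and st: "set \<beta> \<subseteq> {..<l} \<times> {..<m}"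
        using \<beta> by (auto simp: gridtuples_def)
      have lenD: "length \<beta> \<le> D" using len kD[OF P] by simp
      have fill_gt: "xs ! idx q < xs ! (l*m + j)" if "q \<in> set \<beta>" "j < D - length \<beta>" for q j
      proof -
        have "idx q < l*m" using idx_lt st that(1) by auto
        moreover have "l*m + j < M" using that(2) by (simp add: M_def)
        ultimately show ?thesis using strict_nth_less_iff[OF xss(1)] xss(2) by simp
      qed
      have finSb: "finite (Sb \<beta>)" by (simp add: Sb_def)
      show SbH: "Sb \<beta> \<in> nsets H D"
      proof -
        have sub: "Sb \<beta> \<subseteq> H"
        proof -
          have "xs ! idx q \<in> H" if "q \<in> set \<beta>" for q
            using idx_lt[of q] st that lmM xss by auto
          moreover have "xs ! (l*m + j) \<in> H" if "j < D - length \<beta>" for j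
            using that xss by (auto simp: M_def)
          ultimately show ?thesis by (auto simp: Sb_def)
        qed
        have c1: "card ((\<lambda>q. xs ! idx q) ` set \<beta>) = length \<beta>"
          using card_image[OF inj_on_subset[OF xsidx_inj st]] d by (simp add: distinct_card)
        have inj2: "inj_on (\<lambda>j. xs ! (l*m + j)) {..<D - length \<beta>}"
          using xsd xss by (auto simp: inj_on_def nth_eq_iff_index_eq M_def)
        have c2: "card ((\<lambda>j. xs ! (l*m + j)) ` {..<D - length \<beta>}) = D - length \<beta>"
          using card_image[OF inj2] by simp
        have disj: "(\<lambda>q. xs ! idx q) ` set \<beta> \<inter> (\<lambda>j. xs ! (l*m + j)) ` {..<D - length \<beta>} = {}"
          using fill_gt by fastforce
        have "card (Sb \<beta>) = D"
          unfolding Sb_def using card_Un_disjoint[OF _ _ disj] c1 c2 lenD by simp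
        then show ?thesis using sub finSb by (simp add: nsets_def)
      qed
      have rank: "sorted_list_of_set (Sb \<beta>) ! card {q' \<in> set \<beta>. idx q' < idx q} = xs ! idx q"
        if q: "q \<in> set \<beta>" for q
      proof -
        have "{y \<in> Sb \<beta>. y < xs ! idx q} = (\<lambda>q. xs ! idx q) ` {q' \<in> set \<beta>. idx q' < idx q}"
        proof -
          have "xs ! idx q' < xs ! idx q \<longleftrightarrow> idx q' < idx q" if "q' \<in> set \<beta>" for q'
            using strict_nth_less_iff[OF xss(1)] xss(2) idx_lt st that q lmM
            by (metis order_less_le_trans subsetD)
          then show ?thesis using fill_gt[OF q] by (auto simp: Sb_def dest: order.asym)
        qed
        moreover have "inj_on (\<lambda>q. xs ! idx q) {q' \<in> set \<beta>. idx q' < idx q}"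
          by (rule inj_on_subset[OF xsidx_inj]) (use st in auto)
        ultimately have "card {y \<in> Sb \<beta>. y < xs ! idx q} = card {q' \<in> set \<beta>. idx q' < idx q}"
          by (simp add: card_image)
        moreover have "xs ! idx q \<in> Sb \<beta>" using q by (simp add: Sb_def)
        ultimately show ?thesis using sorted_rank[OF finSb] by metis
      qed
      have mapeq: "map (\<lambda>q. e (fst q) (sorted_list_of_set (Sb \<beta>) ! snd q)) (pb \<beta>) = map h \<beta>"
        unfolding pb_def h_def \<sigma>_def idx_def[symmetric] using rank by simp
      have rk_lt: "card {q' \<in> set \<beta>. idx q' < idx q} < D" if q: "q \<in> set \<beta>" for q
      proof -
        have "{q' \<in> set \<beta>. idx q' < idx q} \<subset> set \<beta>" using q by auto
        then have "card {q' \<in> set \<beta>. idx q' < idx q} < card (set \<beta>)" by (simp add: psubset_card_mono)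
        then show ?thesis using lenD d by (simp add: distinct_card)
      qed
      have pbU: "(P, pb \<beta>) \<in> Uc"
        using P lenD rk_lt st by (auto simp: Uc_def A_def pb_def)
      show "map h \<beta> \<in> rels N P \<longleftrightarrow> (P, pb \<beta>) \<in> col (Sb \<beta>)"
      proof -
        have "length (pb \<beta>) = k P" using len by (simp add: pb_def)
        then show ?thesis unfolding col_def using pbU mapeq by simp
      qed
    qed
    have pbeq: "pb \<beta> = pb \<gamma>"
      if \<beta>: "\<beta> \<in> gridtuples l m t" and \<gamma>: "\<gamma> \<in> gridtuples l m t" and eq: "gpull \<beta> = gpull \<gamma>" for \<beta> \<gamma> t
    proof -
      have d: "distinct \<beta>" "distinct \<gamma>" and len: "length \<beta> = t" "length \<gamma> = t"
        and st: "set \<beta> \<subseteq> {..<l} \<times> {..<m}" "set \<gamma> \<subseteq> {..<l} \<times> {..<m}"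
        using \<beta> \<gamma> by (auto simp: gridtuples_def)
      have fsteq: "fst (\<beta>!j) = fst (\<gamma>!j)" if "j < t" for j
      proof -
        have "fst (gpull \<beta>) j = fst (gpull \<gamma>) j" using eq by simp
        then show ?thesis using that len by (simp add: gpull_def)
      qed
      have req: "(fst (\<beta>!i) = fst (\<beta>!j) \<and> snd (\<beta>!i) \<le> snd (\<beta>!j)) \<longleftrightarrow>
                 (fst (\<gamma>!i) = fst (\<gamma>!j) \<and> snd (\<gamma>!i) \<le> snd (\<gamma>!j))" if "i < t" "j < t" for i j
      proof -
        have "(i,j) \<in> snd (gpull \<beta>) \<longleftrightarrow> (i,j) \<in> snd (gpull \<gamma>)" using eq by simp
        then show ?thesis using that len by (simp add: gpull_def)
      qed
      have sndm: "snd (\<beta>!j) < m" "snd (\<gamma>!j) < m" if "j < t" for j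
      proof -
        have "\<beta>!j \<in> set \<beta>" "\<gamma>!j \<in> set \<gamma>" using that len by simp_all
        then show "snd (\<beta>!j) < m" "snd (\<gamma>!j) < m" using st by auto
      qed
      have cardconv: "card {q' \<in> set \<delta>. idx q' < idx (\<delta>!i)} = card {j. j < t \<and> idx (\<delta>!j) < idx (\<delta>!i)}"
        if "distinct \<delta>" "length \<delta> = t" for \<delta> i
      proof -
        have "{q' \<in> set \<delta>. idx q' < idx (\<delta>!i)} = (\<lambda>j. \<delta>!j) ` {j. j < t \<and> idx (\<delta>!j) < idx (\<delta>!i)}"
        proof (intro equalityI subsetI)
          fix x assume x: "x \<in> {q' \<in> set \<delta>. idx q' < idx (\<delta>!i)}"
          then obtain j where j: "j < length \<delta>" "\<delta>!j = x" by (auto simp: in_set_conv_nth)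
          then show "x \<in> (\<lambda>j. \<delta>!j) ` {j. j < t \<and> idx (\<delta>!j) < idx (\<delta>!i)}"
            using x that by auto
        next
          fix x assume "x \<in> (\<lambda>j. \<delta>!j) ` {j. j < t \<and> idx (\<delta>!j) < idx (\<delta>!i)}"
          then show "x \<in> {q' \<in> set \<delta>. idx q' < idx (\<delta>!i)}" using that by auto
        qed
        moreover have "inj_on (\<lambda>j. \<delta>!j) {j. j < t \<and> idx (\<delta>!j) < idx (\<delta>!i)}"
          using that by (auto simp: inj_on_def nth_eq_iff_index_eq)
        ultimately show ?thesis by (simp add: card_image)
      qed
      have seteq: "{j. j < t \<and> idx (\<beta>!j) < idx (\<beta>!i)} = {j. j < t \<and> idx (\<gamma>!j) < idx (\<gamma>!i)}"
        if "i < t" for i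
      proof -
        have "idx (\<beta>!j) < idx (\<beta>!i) \<longleftrightarrow> idx (\<gamma>!j) < idx (\<gamma>!i)" if "j < t" for j
        proof -
          have "idx (\<beta>!j) < idx (\<beta>!i) \<longleftrightarrow> fst (\<beta>!j) < fst (\<beta>!i) \<or> (fst (\<beta>!j) = fst (\<beta>!i) \<and> snd (\<beta>!j) < snd (\<beta>!i))"
            unfolding idx_def by (rule lex_less) (use sndm \<open>i<t\<close> \<open>j<t\<close> in auto)
          also have "\<dots> \<longleftrightarrow> fst (\<gamma>!j) < fst (\<gamma>!i) \<or> (fst (\<gamma>!j) = fst (\<gamma>!i) \<and> snd (\<gamma>!j) < snd (\<gamma>!i))"
            using fsteq[OF \<open>i<t\<close>] fsteq[OF \<open>j<t\<close>] req[OF \<open>i<t\<close> \<open>j<t\<close>] by (auto simp: not_le[symmetric])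
          also have "\<dots> \<longleftrightarrow> idx (\<gamma>!j) < idx (\<gamma>!i)"
            unfolding idx_def by (rule lex_less[symmetric]) (use sndm \<open>i<t\<close> \<open>j<t\<close> in auto)
          finally show ?thesis .
        qed
        then show ?thesis by auto
      qed
      show ?thesis unfolding pb_def
        by (rule nth_equalityI) (use len fsteq seteq cardconv d in auto)
    qed
    define Q where "Q P = (if P \<in> L then gpull ` {\<beta> \<in> gridtuples l m (k P). map h \<beta> \<in> rels N P} else {})" for P
    have QR: "Q \<in> ramsey_patterns l L k"
      unfolding ramsey_patterns_def Q_def using gpull_S by auto
    have unif: "\<forall>P\<in>L. \<forall>\<beta>\<in>gridtuples l m (k P). map h \<beta> \<in> rels N P \<longleftrightarrow> gpull \<beta> \<in> Q P"
    proof (intro ballI iffI)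
      fix P \<beta> assume "P \<in> L" "\<beta> \<in> gridtuples l m (k P)" "map h \<beta> \<in> rels N P"
      then show "gpull \<beta> \<in> Q P" by (auto simp: Q_def)
    next
      fix P \<beta> assume P: "P \<in> L" and \<beta>: "\<beta> \<in> gridtuples l m (k P)" and "gpull \<beta> \<in> Q P"
      then obtain \<gamma> where \<gamma>: "\<gamma> \<in> gridtuples l m (k P)" "map h \<gamma> \<in> rels N P" "gpull \<gamma> = gpull \<beta>"
        by (auto simp: Q_def)
      have "(P, pb \<gamma>) \<in> col (Sb \<gamma>)" using key(1)[OF P \<gamma>(1)] \<gamma>(2) by simp
      moreover have "col (Sb \<gamma>) = col (Sb \<beta>)" using homc SbH P \<beta> \<gamma>(1) by blast
      moreover have "pb \<gamma> = pb \<beta>" using pbeq[OF \<gamma>(1) \<beta> \<gamma>(3)] .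
      ultimately show "map h \<beta> \<in> rels N P" using key(1)[OF P \<beta>] by simp
    qed
    show "\<exists>Q\<in>ramsey_patterns l L k. \<exists>\<sigma>. (\<forall>c<l. \<forall>s<m. \<sigma> c s < R) \<and>
        inj_on (\<lambda>q. \<sigma> (fst q) (snd q)) ({..<l} \<times> {..<m}) \<and>
        (\<forall>P\<in>L. \<forall>\<beta>\<in>gridtuples l m (k P).
            map (\<lambda>q. e (fst q) (\<sigma> (fst q) (snd q))) \<beta> \<in> rels N P \<longleftrightarrow> gpull \<beta> \<in> Q P)"
      using QR \<sigma>R \<sigma>inj unif unfolding h_def by blast
  qed
qed


lemma iso_sym: assumes "iso M N" shows "iso N M"
proof -
  obtain h where h: "bij_betw h (verts M) (verts N)"
    and hp: "\<And>P \<alpha>. set \<alpha> \<subseteq> verts M \<Longrightarrow> map h \<alpha> \<in> rels N P \<longleftrightarrow> \<alpha> \<in> rels M P"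
    using assms by (auto simp: iso_def)
  define h' where "h' = inv_into (verts M) h"
  have b': "bij_betw h' (verts N) (verts M)" using h by (simp add: h'_def bij_betw_inv_into)
  have "map h' \<alpha> \<in> rels M P \<longleftrightarrow> \<alpha> \<in> rels N P" if "set \<alpha> \<subseteq> verts N" for P \<alpha>
  proof -
    have s: "set (map h' \<alpha>) \<subseteq> verts M" using b' that by (auto simp: bij_betw_def)
    have "map h (map h' \<alpha>) = \<alpha>"
      unfolding map_map comp_def
      by (rule map_idI) (use that h in \<open>auto simp: h'_def bij_betw_def f_inv_into_f\<close>)
    then show ?thesis using hp[OF s] by simp
  qed
  then show ?thesis using b' by (auto simp: iso_def)
qed

definition rk :: "nat set \<Rightarrow> (nat \<times> nat) set \<Rightarrow> nat \<Rightarrow> nat" where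
  "rk V r v = card {w \<in> V. (w, v) \<in> r \<and> w \<noteq> v}"

lemma rk_sub:
  assumes so: "split_order l V f r" and vw: "(v,w) \<in> r"
  shows "{u \<in> V. (u, v) \<in> r \<and> u \<noteq> v} \<subseteq> {u \<in> V. (u, w) \<in> r \<and> u \<noteq> w}"
proof
  fix u assume u: "u \<in> {u \<in> V. (u, v) \<in> r \<and> u \<noteq> v}"
  have tr: "trans r" and an: "antisym r" using so by (auto simp: split_order_def)
  have "(u,w) \<in> r" using u vw tr by (auto dest: transD)
  moreover have "u \<noteq> w"
  proof
    assume "u = w" then have "(w,v) \<in> r" using u by simp
    then have "v = w" using vw an by (auto dest: antisymD)
    then show False using u \<open>u = w\<close> by simp
  qed
  ultimately show "u \<in> {u \<in> V. (u, w) \<in> r \<and> u \<noteq> w}" using u by simp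
qed

lemma rk_le_iff:
  assumes so: "split_order l V f r" and fin: "finite V" and v: "v \<in> V" and w: "w \<in> V" and fe: "f v = f w"
  shows "(v,w) \<in> r \<longleftrightarrow> rk V r v \<le> rk V r w"
proof
  assume "(v,w) \<in> r"
  then show "rk V r v \<le> rk V r w" unfolding rk_def using fin rk_sub[OF so] by (intro card_mono) auto
next
  assume le: "rk V r v \<le> rk V r w"
  show "(v,w) \<in> r"
  proof (rule ccontr)
    assume nvw: "(v,w) \<notin> r"
    have "(w,v) \<in> r" using so v w fe nvw by (auto simp: split_order_def)
    moreover have "v \<noteq> w" using nvw so v by (auto simp: split_order_def refl_on_def)
    ultimately have "{u \<in> V. (u, w) \<in> r \<and> u \<noteq> w} \<subset> {u \<in> V. (u, v) \<in> r \<and> u \<noteq> v}"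
      using rk_sub[OF so] w by blast
    then have "rk V r w < rk V r v" unfolding rk_def using fin by (intro psubset_card_mono) auto
    then show False using le by simp
  qed
qed

lemma rk_lt_card:
  assumes fin: "finite V" and v: "v \<in> V"
  shows "rk V r v < card V"
proof -
  have "{w \<in> V. (w, v) \<in> r \<and> w \<noteq> v} \<subset> V" using v by auto
  then show ?thesis unfolding rk_def using fin by (rule psubset_card_mono[rotated])
qed

lemma embed:
  assumes N: "canonical L k N" and M: "canonical L k M" and so: "split_order l (verts M) f r"
    and uni: "uniform L k M Q f r" and cardM: "card (verts M) \<le> m"
    and hinj: "inj_on h ({..<l} \<times> {..<m})" and hV: "h ` ({..<l} \<times> {..<m}) \<subseteq> verts N"
    and gu: "\<forall>P\<in>L. \<forall>\<beta>\<in>gridtuples l m (k P). map h \<beta> \<in> rels N P \<longleftrightarrow> gpull \<beta> \<in> Q P"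
  shows "\<exists>U\<subseteq>verts N. iso (induced N U) M"
proof -
  have finM: "finite (verts M)" using M by (simp add: canonical_def)
  define j where "j v = (f v - 1, rk (verts M) r v)" for v
  have fr: "\<And>v. v \<in> verts M \<Longrightarrow> f v \<in> {1..l}" using so by (simp add: split_order_def)
  have jgrid: "j v \<in> {..<l} \<times> {..<m}" if "v \<in> verts M" for v
  proof -
    have "rk (verts M) r v < card (verts M)" by (rule rk_lt_card) (use finM that in auto)
    then show ?thesis using fr[OF that] cardM by (auto simp: j_def)
  qed
  have comp: "\<And>v w. v \<in> verts M \<Longrightarrow> w \<in> verts M \<Longrightarrow> ((v,w) \<in> r \<or> (w,v) \<in> r) \<longleftrightarrow> f v = f w"
    using so by (simp add: split_order_def)
  have rkle: "\<And>v w. v \<in> verts M \<Longrightarrow> w \<in> verts M \<Longrightarrow> f v = f w \<Longrightarrow> (v,w) \<in> r \<longleftrightarrow> rk (verts M) r v \<le> rk (verts M) r w"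
    using rk_le_iff[OF so finM] by blast
  have fmin: "f v - 1 = f w - 1 \<longleftrightarrow> f v = f w" if "v \<in> verts M" "w \<in> verts M" for v w
  proof -
    have "f v \<ge> 1" "f w \<ge> 1" using fr that by auto
    then show ?thesis by arith
  qed
  have jinj: "inj_on j (verts M)"
  proof (rule inj_onI)
    fix v w assume v: "v \<in> verts M" and w: "w \<in> verts M" and e: "j v = j w"
    then have fe: "f v = f w" using fmin by (simp add: j_def)
    have "rk (verts M) r v = rk (verts M) r w" using e by (simp add: j_def)
    then have "(v,w) \<in> r" "(w,v) \<in> r" using rkle[OF v w fe] rkle[OF w v fe[symmetric]] by auto
    then show "v = w" using so by (auto simp: split_order_def dest: antisymD)
  qed
  have pulleq: "pull f r \<alpha> = gpull (map j \<alpha>)" if "set \<alpha> \<subseteq> verts M" for \<alpha>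
  proof -
    have inM: "\<And>i. i < length \<alpha> \<Longrightarrow> \<alpha>!i \<in> verts M" using that by auto
    have 1: "(\<lambda>i. if i < length \<alpha> then f (\<alpha>!i) else 0) =
             (\<lambda>i. if i < length (map j \<alpha>) then fst (map j \<alpha> ! i) + 1 else 0)"
    proof (rule ext)
      fix i show "(if i < length \<alpha> then f (\<alpha>!i) else 0) =
             (if i < length (map j \<alpha>) then fst (map j \<alpha> ! i) + 1 else 0)"
        using fr[OF inM[of i]] by (auto simp: j_def)
    qed
    have 2: "{(i, i'). i < length \<alpha> \<and> i' < length \<alpha> \<and> (\<alpha>!i, \<alpha>!i') \<in> r} =
             {(i, i'). i < length (map j \<alpha>) \<and> i' < length (map j \<alpha>) \<and>
                fst (map j \<alpha> ! i) = fst (map j \<alpha> ! i') \<and> snd (map j \<alpha> ! i) \<le> snd (map j \<alpha> ! i')}"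
    proof (intro equalityI subsetI; clarify)
      fix i i' assume "i < length \<alpha>" "i' < length \<alpha>" "(\<alpha>!i, \<alpha>!i') \<in> r"
      moreover then have "f (\<alpha>!i) = f (\<alpha>!i')" using comp[OF inM inM] by blast
      ultimately show "i < length (map j \<alpha>) \<and> i' < length (map j \<alpha>) \<and>
                fst (map j \<alpha> ! i) = fst (map j \<alpha> ! i') \<and> snd (map j \<alpha> ! i) \<le> snd (map j \<alpha> ! i')"
        using rkle[OF inM inM] by (auto simp: j_def)
    next
      fix i i' assume a: "i < length (map j \<alpha>)" "i' < length (map j \<alpha>)"
        "fst (map j \<alpha> ! i) = fst (map j \<alpha> ! i')" "snd (map j \<alpha> ! i) \<le> snd (map j \<alpha> ! i')"
      then have "f (\<alpha>!i) = f (\<alpha>!i')" using fmin[OF inM inM] by (simp add: j_def)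
      then show "i < length \<alpha> \<and> i' < length \<alpha> \<and> (\<alpha>!i, \<alpha>!i') \<in> r"
        using a rkle[OF inM inM] by (auto simp: j_def)
    qed
    show ?thesis unfolding pull_def gpull_def using 1 2 by simp
  qed
  define g where "g = h \<circ> j"
  define U where "U = g ` verts M"
  have hinj': "inj_on h (j ` verts M)" by (rule inj_on_subset[OF hinj]) (use jgrid in blast)
  have ginj: "inj_on g (verts M)" unfolding g_def using comp_inj_on[OF jinj hinj'] .
  have UV: "U \<subseteq> verts N" using hV jgrid by (auto simp: U_def g_def)
  have "iso M (induced N U)"
    unfolding iso_def
  proof (intro exI conjI allI impI)
    show "bij_betw g (verts M) (verts (induced N U))"
      using ginj by (simp add: induced_def U_def bij_betw_def)
  next
    fix P \<alpha> assume sa: "set \<alpha> \<subseteq> verts M"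
    have sU: "set (map g \<alpha>) \<subseteq> U" using sa by (auto simp: U_def)
    have "map g \<alpha> \<in> rels N P \<longleftrightarrow> \<alpha> \<in> rels M P"
    proof (cases "P \<in> L")
      case P: True
      show ?thesis
      proof (cases "distinct \<alpha> \<and> length \<alpha> = k P")
        case True
        have ji: "inj_on j (set \<alpha>)" using inj_on_subset[OF jinj sa] .
        have sj: "set (map j \<alpha>) \<subseteq> {..<l} \<times> {..<m}" using sa jgrid by (simp only: set_map) blast
        have mg: "map j \<alpha> \<in> gridtuples l m (k P)"
          using True ji sj by (simp add: gridtuples_def distinct_map)
        have mgh: "map g \<alpha> = map h (map j \<alpha>)" by (simp add: g_def)
        have "map h (map j \<alpha>) \<in> rels N P \<longleftrightarrow> gpull (map j \<alpha>) \<in> Q P" using gu P mg by blast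
        then have "map g \<alpha> \<in> rels N P \<longleftrightarrow> gpull (map j \<alpha>) \<in> Q P" unfolding mgh .
        also have "\<dots> \<longleftrightarrow> pull f r \<alpha> \<in> Q P" using pulleq[OF sa] by simp
        also have "\<dots> \<longleftrightarrow> \<alpha> \<in> rels M P"
          using uni P True sa by (auto simp: uniform_def inj_tuples_def)
        finally show ?thesis .
      next
        case False
        have "\<alpha> \<notin> rels M P" using M P False by (auto simp: canonical_def inj_tuples_def)
        moreover have "map g \<alpha> \<notin> rels N P"
        proof
          assume a: "map g \<alpha> \<in> rels N P"
          have "rels N P \<subseteq> inj_tuples (verts N) (k P)" using N P by (simp add: canonical_def)
          then have "map g \<alpha> \<in> inj_tuples (verts N) (k P)" using a by blast
          then have "distinct (map g \<alpha>) \<and> length (map g \<alpha>) = k P"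
            by (simp add: inj_tuples_def)
          then show False using False by (simp add: distinct_map)
        qed
        ultimately show ?thesis by simp
      qed
    next
      case False
      then show ?thesis using M N by (simp add: canonical_def)
    qed
    then show "map g \<alpha> \<in> rels (induced N U) P \<longleftrightarrow> \<alpha> \<in> rels M P"
      using sU by (simp add: induced_def)
  qed
  then show ?thesis using UV iso_sym by blast
qed


lemma uniform_in_Forb:
  assumes QR: "Q \<in> ramsey_patterns l L k" and QF: "Q \<notin> U_fam l L k F" and FG: "\<forall>G\<in>F. canonical L k G"
    and N: "canonical L k N" and so: "split_order l (verts N) f r" and uni: "uniform L k N Q f r"
  shows "N \<in> Forb L k F"
  unfolding Forb_def
proof (intro CollectI conjI N allI impI ballI notI)
  fix Us G assume UV: "Us \<subseteq> verts N" and G: "G \<in> F" and iso: "iso (induced N Us) G"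
  have vU: "verts (induced N Us) = Us" by (simp add: induced_def)
  have rU: "rels (induced N Us) P = {\<alpha> \<in> rels N P. set \<alpha> \<subseteq> Us}" for P by (simp add: induced_def)
  obtain h where hb: "bij_betw h Us (verts G)"
    and hp: "\<And>P \<alpha>. set \<alpha> \<subseteq> Us \<Longrightarrow> map h \<alpha> \<in> rels G P \<longleftrightarrow> \<alpha> \<in> rels N P"
    using iso unfolding iso_def vU rU by auto
  define h' where "h' = inv_into Us h"
  have hb': "bij_betw h' (verts G) Us" using hb by (simp add: h'_def bij_betw_inv_into)
  have h'Us: "\<And>a. a \<in> verts G \<Longrightarrow> h' a \<in> Us" using hb' by (auto simp: bij_betw_def)
  have hh': "\<And>a. a \<in> verts G \<Longrightarrow> h (h' a) = a" using hb by (auto simp: h'_def bij_betw_def f_inv_into_f)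
  have h'inj: "inj_on h' (verts G)" using hb' by (simp add: bij_betw_def)
  have soN: "\<forall>v\<in>verts N. f v \<in> {1..l}" "r \<subseteq> verts N \<times> verts N" "refl_on (verts N) r" "antisym r" "trans r"
     "\<forall>v\<in>verts N. \<forall>w\<in>verts N. ((v, w) \<in> r \<or> (w, v) \<in> r) \<longleftrightarrow> f v = f w"
    using so by (simp_all add: split_order_def)
  define f' where "f' = f \<circ> h'"
  define r' where "r' = {(a,b). a \<in> verts G \<and> b \<in> verts G \<and> (h' a, h' b) \<in> r}"
  have h'N: "\<And>a. a \<in> verts G \<Longrightarrow> h' a \<in> verts N" using h'Us UV by blast
  have so': "split_order l (verts G) f' r'"
    unfolding split_order_def
  proof (intro conjI)
    show "\<forall>v\<in>verts G. f' v \<in> {1..l}" using soN(1) h'N by (simp add: f'_def)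
    show "r' \<subseteq> verts G \<times> verts G" by (auto simp: r'_def)
    show "refl_on (verts G) r'" using soN(3) h'N by (auto simp: refl_on_def r'_def)
    show "antisym r'"
    proof (rule antisymI)
      fix a b assume "(a,b) \<in> r'" "(b,a) \<in> r'"
      then have "h' a = h' b" "a \<in> verts G" "b \<in> verts G" using soN(4) by (auto simp: r'_def dest: antisymD)
      then show "a = b" using h'inj by (auto simp: inj_on_def)
    qed
    show "trans r'" using soN(5) by (auto simp: trans_def r'_def)
    show "\<forall>v\<in>verts G. \<forall>w\<in>verts G. ((v, w) \<in> r' \<or> (w, v) \<in> r') \<longleftrightarrow> f' v = f' w"
      using soN(6) h'N by (auto simp: r'_def f'_def)
  qed
  have GC: "canonical L k G" using FG G by blast
  have key: "\<beta> \<in> rels G P \<longleftrightarrow> \<beta> \<in> inj_tuples (verts G) (k P) \<and> pull f' r' \<beta> \<in> Q P"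
    if P: "P \<in> L" and sb: "set \<beta> \<subseteq> verts G" for P \<beta>
  proof -
    define \<alpha> where "\<alpha> = map h' \<beta>"
    have sa: "set \<alpha> \<subseteq> Us" using sb h'Us by (auto simp: \<alpha>_def)
    have ha: "map h \<alpha> = \<beta>" unfolding \<alpha>_def map_map comp_def
      by (rule map_idI) (use sb hh' in auto)
    have "\<beta> \<in> rels G P \<longleftrightarrow> \<alpha> \<in> rels N P" using hp[OF sa] ha by simp
    also have "\<dots> \<longleftrightarrow> \<alpha> \<in> inj_tuples (verts N) (k P) \<and> pull f r \<alpha> \<in> Q P"
      using uni P by (simp add: uniform_def)
    also have "\<alpha> \<in> inj_tuples (verts N) (k P) \<longleftrightarrow> \<beta> \<in> inj_tuples (verts G) (k P)"
    proof -
      have "inj_on h' (set \<beta>)" using inj_on_subset[OF h'inj sb] .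
      then have "distinct \<alpha> \<longleftrightarrow> distinct \<beta>" by (simp add: \<alpha>_def distinct_map)
      moreover have "set \<alpha> \<subseteq> verts N" using sa UV by blast
      ultimately show ?thesis using sb by (simp add: inj_tuples_def \<alpha>_def)
    qed
    also have "pull f r \<alpha> = pull f' r' \<beta>"
    proof -
      have "\<And>i. i < length \<beta> \<Longrightarrow> \<beta>!i \<in> verts G" using sb by auto
      then show ?thesis unfolding pull_def \<alpha>_def f'_def r'_def by auto
    qed
    finally show ?thesis .
  qed
  have uni': "uniform L k G Q f' r'"
    unfolding uniform_def
  proof
    fix P assume P: "P \<in> L"
    show "rels G P = {\<beta> \<in> inj_tuples (verts G) (k P). pull f' r' \<beta> \<in> Q P}"
    proof (intro equalityI subsetI)
      fix \<beta> assume b: "\<beta> \<in> rels G P"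
      then have "\<beta> \<in> inj_tuples (verts G) (k P)" using GC P by (auto simp: canonical_def)
      then have "set \<beta> \<subseteq> verts G" by (simp add: inj_tuples_def)
      then show "\<beta> \<in> {\<beta> \<in> inj_tuples (verts G) (k P). pull f' r' \<beta> \<in> Q P}" using key[OF P] b by blast
    next
      fix \<beta> assume b: "\<beta> \<in> {\<beta> \<in> inj_tuples (verts G) (k P). pull f' r' \<beta> \<in> Q P}"
      then have "set \<beta> \<subseteq> verts G" by (simp add: inj_tuples_def)
      then show "\<beta> \<in> rels G P" using key[OF P] b by blast
    qed
  qed
  have "Q \<in> U l L k G" using QR so' uni' by (auto simp: U_def)
  then show False using QF G by (auto simp: U_fam_def)
qed

lemma pull_S:
  assumes so: "split_order l V f r" and a: "\<alpha> \<in> inj_tuples V t"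
  shows "pull f r \<alpha> \<in> S l t"
proof -
  have d: "distinct \<alpha>" and len: "length \<alpha> = t" and sV: "set \<alpha> \<subseteq> V" using a by (auto simp: inj_tuples_def)
  have inV: "\<And>i. i < t \<Longrightarrow> \<alpha>!i \<in> V" using sV len by auto
  have soV: "\<forall>v\<in>V. f v \<in> {1..l}" "refl_on V r" "antisym r" "trans r"
     "\<forall>v\<in>V. \<forall>w\<in>V. ((v, w) \<in> r \<or> (w, v) \<in> r) \<longleftrightarrow> f v = f w"
    using so by (simp_all add: split_order_def)
  let ?f = "\<lambda>i. if i < length \<alpha> then f (\<alpha>!i) else 0"
  let ?r = "{(i,j). i < length \<alpha> \<and> j < length \<alpha> \<and> (\<alpha>!i, \<alpha>!j) \<in> r}"
  have "split_order l {..<t} ?f ?r"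
    unfolding split_order_def
  proof (intro conjI)
    show "\<forall>v\<in>{..<t}. ?f v \<in> {1..l}" using soV(1) inV len by auto
    show "?r \<subseteq> {..<t} \<times> {..<t}" using len by auto
    show "refl_on {..<t} ?r" using len inV soV(2) by (auto simp: refl_on_def)
    show "antisym ?r"
    proof (rule antisymI)
      fix i j assume "(i,j) \<in> ?r" "(j,i) \<in> ?r"
      then have "\<alpha>!i = \<alpha>!j" "i < length \<alpha>" "j < length \<alpha>" using soV(3) by (auto dest: antisymD)
      then show "i = j" using d by (simp add: nth_eq_iff_index_eq)
    qed
    show "trans ?r" using soV(4) by (auto simp: trans_def)
    show "\<forall>v\<in>{..<t}. \<forall>w\<in>{..<t}. ((v, w) \<in> ?r \<or> (w, v) \<in> ?r) = (?f v = ?f w)"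
      using soV(5) inV len by auto
  qed
  moreover have "\<forall>i. i \<ge> t \<longrightarrow> ?f i = 0" using len by auto
  ultimately show ?thesis unfolding S_def pull_def by simp
qed

definition fmod :: "nat \<Rightarrow> nat \<Rightarrow> nat" where "fmod l i = i mod l + 1"
definition rmod :: "nat \<Rightarrow> nat \<Rightarrow> (nat \<times> nat) set" where
  "rmod l n = {(i,j). i < n \<and> j < n \<and> i mod l = j mod l \<and> i \<le> j}"

definition ustruc :: "'p set \<Rightarrow> ('p \<Rightarrow> nat) \<Rightarrow> nat \<Rightarrow> nat \<Rightarrow> ('p \<Rightarrow> ((nat \<Rightarrow> nat) \<times> (nat \<times> nat) set) set) \<Rightarrow> 'p struc" where
  "ustruc L k l n Q = \<lparr>verts = {..<n}, rels = (\<lambda>P. if P \<in> L then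
      {\<alpha> \<in> inj_tuples {..<n} (k P). pull (fmod l) (rmod l n) \<alpha> \<in> Q P} else {})\<rparr>"

lemma ustruc_canonical: "canonical L k (ustruc L k l n Q)"
  by (auto simp: canonical_def ustruc_def)

lemma ustruc_split: "l \<ge> 1 \<Longrightarrow> split_order l {..<n} (fmod l) (rmod l n)"
  by (auto simp: split_order_def fmod_def rmod_def refl_on_def antisym_def trans_def Suc_le_eq)

lemma ustruc_uniform: "uniform L k (ustruc L k l n Q) Q (fmod l) (rmod l n)"
  by (simp add: uniform_def ustruc_def)

lemma ustruc_verts: "verts (ustruc L k l n Q) = {..<n}"
  by (simp add: ustruc_def)

lemma ustruc_rel2:
  assumes "P \<in> L" "k P = 2" "i < n" "j < n" "i \<noteq> j"
  shows "[i,j] \<in> rels (ustruc L k l n Q) P \<longleftrightarrow> pull (fmod l) (rmod l n) [i,j] \<in> Q P"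
  using assms by (simp add: ustruc_def inj_tuples_def)

lemma inj2_iff: "inj_on g {..<2::nat} \<longleftrightarrow> g 0 \<noteq> g 1"
proof
  assume "inj_on g {..<2}" then show "g 0 \<noteq> g 1" using inj_onD[of g "{..<2}" 0 1] by auto
next
  assume "g 0 \<noteq> g 1" then show "inj_on g {..<2}" by (auto simp: inj_on_def less_2_cases_iff)
qed

lemma finite_S: "finite (S l t)"
proof -
  define G where "G = {g :: nat \<Rightarrow> nat. \<forall>i. (i < t \<longrightarrow> g i \<le> l) \<and> (t \<le> i \<longrightarrow> g i = 0)}"
  have "G \<subseteq> (\<lambda>xs i. if i < t then xs!i else 0) ` {xs. set xs \<subseteq> {..l} \<and> length xs = t}"
  proof
    fix g assume g: "g \<in> G"
    have "g = (\<lambda>i. if i < t then map g [0..<t] ! i else 0)" using g by (auto simp: G_def)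
    moreover have "map g [0..<t] \<in> {xs. set xs \<subseteq> {..l} \<and> length xs = t}" using g by (auto simp: G_def)
    ultimately show "g \<in> (\<lambda>xs i. if i < t then xs!i else 0) ` {xs. set xs \<subseteq> {..l} \<and> length xs = t}" by blast
  qed
  then have "finite G" by (rule finite_subset) (intro finite_imageI finite_lists_length_eq; simp)
  then have fG: "finite (G \<times> Pow ({..<t} \<times> {..<t}))" by simp
  have "S l t \<subseteq> G \<times> Pow ({..<t} \<times> {..<t})"
    by (auto simp: S_def split_order_def G_def)
  then show ?thesis using fG by (rule finite_subset)
qed

lemma finite_patterns:
  assumes "finite L"
  shows "finite (ramsey_patterns l L k)"
proof -
  define SS where "SS = (\<Union>P\<in>L. S l (k P))"
  have fSS: "finite SS" using assms finite_S by (simp add: SS_def)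
  have "ramsey_patterns l L k \<subseteq> (\<lambda>g P. if P \<in> L then g P else {}) ` (PiE L (\<lambda>_. Pow SS))"
  proof
    fix Q assume Q: "Q \<in> ramsey_patterns l L k"
    have "Q = (\<lambda>P. if P \<in> L then restrict Q L P else {})"
    proof (rule ext)
      fix P show "Q P = (if P \<in> L then restrict Q L P else {})"
        using Q by (cases "P \<in> L") (auto simp: ramsey_patterns_def)
    qed
    moreover have "restrict Q L \<in> PiE L (\<lambda>_. Pow SS)" using Q by (auto simp: ramsey_patterns_def SS_def)
    ultimately show "Q \<in> (\<lambda>g P. if P \<in> L then g P else {}) ` (PiE L (\<lambda>_. Pow SS))" by blast
  qed
  moreover have "finite (PiE L (\<lambda>_. Pow SS))" using assms fSS by (simp add: finite_PiE)
  ultimately show ?thesis by (meson finite_imageI finite_subset)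
qed

lemma witness_bound:
  assumes "finite PS"
  shows "\<exists>m0. \<forall>Q\<in>PS. Q \<in> U_fam l L k F \<longrightarrow>
     (\<exists>M\<in>F. \<exists>f r. split_order l (verts M) f r \<and> uniform L k M Q f r \<and> card (verts M) \<le> m0)"
proof -
  define W where "W Q = (SOME M. M \<in> F \<and> Q \<in> U l L k M)" for Q
  define m0 where "m0 = (\<Sum>Q\<in>PS. card (verts (W Q)))"
  show ?thesis
  proof (rule exI[of _ m0], intro ballI impI)
    fix Q assume Q: "Q \<in> PS" "Q \<in> U_fam l L k F"
    then have "\<exists>M. M \<in> F \<and> Q \<in> U l L k M" by (auto simp: U_fam_def)
    then have W: "W Q \<in> F \<and> Q \<in> U l L k (W Q)" unfolding W_def by (rule someI_ex)
    have "card (verts (W Q)) \<le> m0" unfolding m0_def by (rule member_le_sum[OF Q(1) _ assms]) simp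
    then show "\<exists>M\<in>F. \<exists>f r. split_order l (verts M) f r \<and> uniform L k M Q f r \<and> card (verts M) \<le> m0"
      using W by (auto simp: U_def)
  qed
qed

lemma S2_eq:
  assumes a: "(g,r) \<in> S l 2" and b: "(g',r') \<in> S l 2" and "g 0 = g' 0" "g 1 = g' 1"
    and "(0,1) \<in> r \<longleftrightarrow> (0,1) \<in> r'" and "(1,0) \<in> r \<longleftrightarrow> (1,0) \<in> r'"
  shows "(g,r) = (g',r')"
proof -
  have sa: "split_order l {..<2} g r" "\<forall>i. i \<ge> 2 \<longrightarrow> g i = 0" using a by (auto simp: S_def)
  have sb: "split_order l {..<2} g' r'" "\<forall>i. i \<ge> 2 \<longrightarrow> g' i = 0" using b by (auto simp: S_def)
  have "g = g'"
  proof
    fix i show "g i = g' i" using sa(2) sb(2) assms(3,4) by (cases "i < 2") (auto simp: less_2_cases_iff)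
  qed
  moreover have "r = r'"
  proof -
    have ra: "r \<subseteq> {..<2} \<times> {..<2}" "(0,0) \<in> r" "(1,1) \<in> r"
      using sa(1) by (auto simp: split_order_def refl_on_def)
    have rb: "r' \<subseteq> {..<2} \<times> {..<2}" "(0,0) \<in> r'" "(1,1) \<in> r'"
      using sb(1) by (auto simp: split_order_def refl_on_def)
    show ?thesis
    proof (intro equalityI subsetI)
      fix x assume "x \<in> r" then obtain a b where x: "x = (a,b)" "a < 2" "b < 2" using ra by auto
      then show "x \<in> r'" using \<open>x \<in> r\<close> rb assms(5,6) by (auto simp: less_2_cases_iff)
    next
      fix x assume "x \<in> r'" then obtain a b where x: "x = (a,b)" "a < 2" "b < 2" using rb by auto
      then show "x \<in> r" using \<open>x \<in> r'\<close> ra assms(5,6) by (auto simp: less_2_cases_iff)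
    qed
  qed
  ultimately show ?thesis by simp
qed

lemma S2_eq':
  assumes "\<tau> \<in> S l 2" "\<tau>' \<in> S l 2" "fst \<tau> 0 = fst \<tau>' 0" "fst \<tau> 1 = fst \<tau>' 1"
    "(0,1) \<in> snd \<tau> \<longleftrightarrow> (0,1) \<in> snd \<tau>'" "(1,0) \<in> snd \<tau> \<longleftrightarrow> (1,0) \<in> snd \<tau>'"
  shows "\<tau> = \<tau>'"
  using S2_eq[of "fst \<tau>" "snd \<tau>" l "fst \<tau>'" "snd \<tau>'"] assms by simp

lemma real2:
  assumes t: "\<tau> \<in> S l 2" and m: "2 \<le> m"
  shows "\<exists>\<beta>\<in>gridtuples l m 2. gpull \<beta> = \<tau>"
proof -
  obtain g r where tg: "\<tau> = (g,r)" by (cases \<tau>)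
  have so: "split_order l {..<2} g r" using t tg by (simp add: S_def)
  have g01: "g 0 \<in> {1..l}" "g 1 \<in> {1..l}" using so by (auto simp: split_order_def)
  have comp: "((0,1) \<in> r \<or> (1,0) \<in> r) \<longleftrightarrow> g 0 = g 1" using so by (auto simp: split_order_def)
  have anti: "\<not> ((0,1) \<in> r \<and> (1,0) \<in> r)" using so by (auto simp: split_order_def dest: antisymD)
  define c0 where "c0 = g 0 - 1"
  define c1 where "c1 = g 1 - 1"
  have c: "c0 < l" "c1 < l" "c0 + 1 = g 0" "c1 + 1 = g 1" using g01 by (auto simp: c0_def c1_def)
  define \<beta> :: "(nat \<times> nat) list" where "\<beta> = (if g 0 \<noteq> g 1 then [(c0, 0), (c1, 0)]
     else if (0,1) \<in> r then [(c0, 0), (c0, 1)] else [(c0, 1), (c0, 0)])"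
  have bg: "\<beta> \<in> gridtuples l m 2"
    using c m comp by (auto simp: \<beta>_def gridtuples_def)
  have "gpull \<beta> = (g, r)"
  proof (rule S2_eq'[OF gpull_S[OF bg] t[unfolded tg]])
    show "fst (gpull \<beta>) 0 = fst (g, r) 0" "fst (gpull \<beta>) 1 = fst (g, r) 1"
      using c comp by (auto simp: \<beta>_def gpull_def)
    show "(0,1) \<in> snd (gpull \<beta>) \<longleftrightarrow> (0,1) \<in> snd (g, r)" "(1,0) \<in> snd (gpull \<beta>) \<longleftrightarrow> (1,0) \<in> snd (g, r)"
      using c comp anti by (auto simp: \<beta>_def gpull_def)
  qed
  then show ?thesis using bg tg by blast
qed


lemma len2: "length xs = 2 \<Longrightarrow> \<exists>a b. xs = [a,b]"
  by (auto simp: length_Suc_conv numeral_2_eq_2)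

locale core =
  fixes L :: "'q set" and k :: "'q \<Rightarrow> nat" and E :: 'q and F :: "'q struc set" and Mod :: "'q struc set"
  assumes lk: "lang_ok L k" and EL: "E \<in> L" and kE: "k E = 2"
    and sym: "\<forall>N\<in>Mod. \<forall>x y. [x,y] \<in> rels N E \<longrightarrow> [y,x] \<in> rels N E"
    and FG: "\<forall>G\<in>F. canonical L k G" and ModF: "Mod = Forb L k F"
begin

definition valid :: "nat \<Rightarrow> bool" where
  "valid l \<longleftrightarrow> l \<ge> 1 \<and> (\<forall>n. \<exists>N\<in>Mod. card (verts N) = n \<and> turan_sub n l (QAtom E [0,1]) N)"

lemma ie: "interp_edge (QAtom E [0,1]) N x y \<longleftrightarrow> x \<in> verts N \<and> y \<in> verts N \<and> x \<noteq> y \<and> [x,y] \<in> rels N E"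
  by (simp add: interp_edge_def asg_def)

lemma Mod_canonical: "N \<in> Mod \<Longrightarrow> canonical L k N"
  using ModF by (simp add: Forb_def)

lemma Mod_no_iso: "N \<in> Mod \<Longrightarrow> W \<subseteq> verts N \<Longrightarrow> G \<in> F \<Longrightarrow> \<not> iso (induced N W) G"
  using ModF by (simp add: Forb_def)

lemma valid_turan:
  assumes l: "l \<ge> 1" and QT: "Q \<in> turan_patterns l L k E" and QF: "Q \<notin> U_fam l L k F"
  shows "valid l"
  unfolding valid_def
proof (intro conjI allI l)
  fix n
  define N where "N = ustruc L k l n Q"
  have QR: "Q \<in> ramsey_patterns l L k" using QT by (simp add: turan_patterns_def)
  have QE: "Q E = {(g, r) \<in> S l 2. inj_on g {..<2}}" using QT by (simp add: turan_patterns_def)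
  have NM: "N \<in> Mod" unfolding ModF N_def
    by (rule uniform_in_Forb[OF QR QF FG ustruc_canonical _ ustruc_uniform])
       (simp add: ustruc_verts ustruc_split[OF l])
  have "turan_sub n l (QAtom E [0,1]) N"
    unfolding turan_sub_def
  proof (intro exI[of _ id] conjI allI impI)
    show "inj_on id {..<n}" by simp
    show "id ` {..<n} \<subseteq> verts N" by (simp add: N_def ustruc_verts)
    fix i j assume te: "turan_edge n l i j"
    then have ij: "i < n" "j < n" "i mod l \<noteq> j mod l" by (auto simp: turan_edge_def)
    then have "i \<noteq> j" by auto
    define \<tau> where "\<tau> = pull (fmod l) (rmod l n) [i,j]"
    have "[i,j] \<in> inj_tuples {..<n} 2" using ij \<open>i \<noteq> j\<close> by (simp add: inj_tuples_def)
    then have \<tau>S: "\<tau> \<in> S l 2" unfolding \<tau>_def by (rule pull_S[OF ustruc_split[OF l]])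
    have "inj_on (fst \<tau>) {..<2}" using ij by (simp add: inj2_iff \<tau>_def pull_def fmod_def)
    then have "\<tau> \<in> Q E" unfolding QE using \<tau>S by (cases \<tau>) auto
    then have "[i,j] \<in> rels N E" unfolding N_def \<tau>_def using ustruc_rel2[where P=E and k=k and L=L, OF EL kE ij(1,2) \<open>i \<noteq> j\<close>] by simp
    then show "interp_edge (QAtom E [0,1]) N (id i) (id j)"
      unfolding ie id_def using ij \<open>i \<noteq> j\<close> by (simp add: N_def ustruc_verts)
  qed
  then show "\<exists>N\<in>Mod. card (verts N) = n \<and> turan_sub n l (QAtom E [0,1]) N"
    using NM by (intro bexI[of _ N]) (auto simp: N_def ustruc_verts)
qed

lemma valid_complete:
  assumes l: "l \<ge> 1" and QC: "Q \<in> complete_patterns L k E" and QF: "Q \<notin> U_fam 1 L k F"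
  shows "valid l"
  unfolding valid_def
proof (intro conjI allI l)
  fix n
  define N where "N = ustruc L k 1 n Q"
  have QR: "Q \<in> ramsey_patterns 1 L k" using QC by (simp add: complete_patterns_def)
  have QE: "Q E = S 1 2" using QC by (simp add: complete_patterns_def)
  have NM: "N \<in> Mod" unfolding ModF N_def
    by (rule uniform_in_Forb[OF QR QF FG ustruc_canonical _ ustruc_uniform])
       (simp add: ustruc_verts ustruc_split)
  have "turan_sub n l (QAtom E [0,1]) N"
    unfolding turan_sub_def
  proof (intro exI[of _ id] conjI allI impI)
    show "inj_on id {..<n}" by simp
    show "id ` {..<n} \<subseteq> verts N" by (simp add: N_def ustruc_verts)
    fix i j assume te: "turan_edge n l i j"
    then have ij: "i < n" "j < n" "i \<noteq> j" by (auto simp: turan_edge_def)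
    have "[i,j] \<in> inj_tuples {..<n} 2" using ij by (simp add: inj_tuples_def)
    moreover have "split_order 1 {..<n} (fmod 1) (rmod 1 n)" by (rule ustruc_split) simp
    ultimately have "pull (fmod 1) (rmod 1 n) [i,j] \<in> Q E" unfolding QE using pull_S by blast
    then have "[i,j] \<in> rels N E" unfolding N_def using ustruc_rel2[where P=E and k=k and L=L, OF EL kE ij] by simp
    then show "interp_edge (QAtom E [0,1]) N (id i) (id j)"
      unfolding ie id_def using ij by (simp add: N_def ustruc_verts)
  qed
  then show "\<exists>N\<in>Mod. card (verts N) = n \<and> turan_sub n l (QAtom E [0,1]) N"
    using NM by (intro bexI[of _ N]) (auto simp: N_def ustruc_verts)
qed

lemma finL: "finite L" using lk by (simp add: lang_ok_def)

lemma clique_bound: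
  assumes CU: "complete_patterns L k E \<subseteq> U_fam 1 L k F"
  shows "\<exists>K::nat. \<forall>N\<in>Mod. \<forall>g. inj_on g {..<K} \<longrightarrow> g ` {..<K} \<subseteq> verts N \<longrightarrow>
            \<not> (\<forall>i<K. \<forall>j<K. i \<noteq> j \<longrightarrow> [g i, g j] \<in> rels N E)"
proof -
  obtain m0 where m0: "\<forall>Q\<in>ramsey_patterns 1 L k. Q \<in> U_fam 1 L k F \<longrightarrow>
     (\<exists>M\<in>F. \<exists>f r. split_order 1 (verts M) f r \<and> uniform L k M Q f r \<and> card (verts M) \<le> m0)"
    using witness_bound[OF finite_patterns[OF finL]] by blast
  define m where "m = max m0 2"
  obtain R where R: "\<forall>(N::'q struc) (e::nat \<Rightarrow> nat \<Rightarrow> nat).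
     (\<exists>Q\<in>ramsey_patterns 1 L k. \<exists>\<sigma>. (\<forall>c<1. \<forall>s<m. \<sigma> c s < R) \<and>
        inj_on (\<lambda>q. \<sigma> (fst q) (snd q)) ({..<1} \<times> {..<m}) \<and>
        (\<forall>P\<in>L. \<forall>\<beta>\<in>gridtuples 1 m (k P).
            map (\<lambda>q. e (fst q) (\<sigma> (fst q) (snd q))) \<beta> \<in> rels N P \<longleftrightarrow> gpull \<beta> \<in> Q P))"
    using ramsey_grid[OF lk, of 1 m] by blast
  show ?thesis
  proof (rule exI[of _ R], intro ballI allI impI notI)
    fix N g assume NM: "N \<in> Mod" and ginj: "inj_on g {..<R}" and gV: "g ` {..<R} \<subseteq> verts N"
      and cl: "\<forall>i<R. \<forall>j<R. i \<noteq> j \<longrightarrow> [g i, g j] \<in> rels N E"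
    obtain Q \<sigma> where QR: "Q \<in> ramsey_patterns 1 L k" and \<sigma>R: "\<forall>c<1. \<forall>s<m. \<sigma> c s < R"
      and \<sigma>inj: "inj_on (\<lambda>q. \<sigma> (fst q) (snd q)) ({..<1} \<times> {..<m})"
      and gu: "\<forall>P\<in>L. \<forall>\<beta>\<in>gridtuples 1 m (k P).
            map (\<lambda>q. g (\<sigma> (fst q) (snd q))) \<beta> \<in> rels N P \<longleftrightarrow> gpull \<beta> \<in> Q P"
      using spec[OF spec[OF R, of N], of "\<lambda>c s. g s"] by blast
    define h where "h q = g (\<sigma> (fst q) (snd q))" for q :: "nat \<times> nat"
    have \<sigma>R': "\<And>q. q \<in> {..<1} \<times> {..<m} \<Longrightarrow> \<sigma> (fst q) (snd q) < R" using \<sigma>R by auto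
    have hinj: "inj_on h ({..<1} \<times> {..<m})"
    proof (rule inj_onI)
      fix q q' assume q: "q \<in> {..<1} \<times> {..<m}" "q' \<in> {..<1} \<times> {..<m}" "h q = h q'"
      then have "\<sigma> (fst q) (snd q) = \<sigma> (fst q') (snd q')"
        using inj_onD[OF ginj _ ] \<sigma>R'[OF q(1)] \<sigma>R'[OF q(2)] by (simp add: h_def)
      then show "q = q'" using inj_onD[OF \<sigma>inj _ q(1) q(2)] by simp
    qed
    have hV: "h ` ({..<1} \<times> {..<m}) \<subseteq> verts N" using gV \<sigma>R' by (auto simp: h_def)
    have hedge: "[h q, h q'] \<in> rels N E" if "q \<in> {..<1} \<times> {..<m}" "q' \<in> {..<1} \<times> {..<m}" "q \<noteq> q'" for q q'
    proof -
      have "\<sigma> (fst q) (snd q) \<noteq> \<sigma> (fst q') (snd q')" using inj_onD[OF \<sigma>inj _ that(1) that(2)] that(3) by auto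
      then show ?thesis using cl \<sigma>R'[OF that(1)] \<sigma>R'[OF that(2)] by (simp add: h_def)
    qed
    have gu': "\<forall>P\<in>L. \<forall>\<beta>\<in>gridtuples 1 m (k P). map h \<beta> \<in> rels N P \<longleftrightarrow> gpull \<beta> \<in> Q P"
    proof -
      have hh: "h = (\<lambda>q. g (\<sigma> (fst q) (snd q)))" by (rule ext) (simp add: h_def)
      show ?thesis using gu unfolding hh .
    qed
    have QC: "Q \<in> complete_patterns L k E"
    proof -
      have "Q E = S 1 2"
      proof
        have "Q E \<subseteq> S 1 (k E)" using QR EL by (simp add: ramsey_patterns_def)
        then show "Q E \<subseteq> S 1 2" using kE by simp
        show "S 1 2 \<subseteq> Q E"
        proof
          fix \<tau> assume \<tau>: "\<tau> \<in> S 1 2"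
          obtain \<beta> where \<beta>: "\<beta> \<in> gridtuples 1 m 2" "gpull \<beta> = \<tau>"
            using real2[OF \<tau>, of m] by (auto simp: m_def)
          have "length \<beta> = 2" using \<beta>(1) by (simp add: gridtuples_def)
          then obtain a b where ab: "\<beta> = [a,b]" using len2 by blast
          have "a \<in> {..<1} \<times> {..<m}" "b \<in> {..<1} \<times> {..<m}" "a \<noteq> b"
            using \<beta>(1) ab by (auto simp: gridtuples_def)
          then have "map h \<beta> \<in> rels N E" using hedge ab by simp
          then show "\<tau> \<in> Q E" using gu' EL kE \<beta> by auto
        qed
      qed
      then show ?thesis using QR by (simp add: complete_patterns_def)
    qed
    then obtain M f r where M: "M \<in> F" "split_order 1 (verts M) f r" "uniform L k M Q f r" "card (verts M) \<le> m0"
      using m0 QR CU by blast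
    have "\<exists>U\<subseteq>verts N. iso (induced N U) M"
      by (rule embed[OF Mod_canonical[OF NM] _ M(2,3) _ hinj hV gu'])
         (use M FG in \<open>auto simp: m_def\<close>)
    then show False using Mod_no_iso[OF NM] M(1) by blast
  qed
qed

end


context core begin

lemma turan_bound:
  assumes l: "l \<ge> 1" and TU: "turan_patterns l L k E \<subseteq> U_fam l L k F"
    and CU: "complete_patterns L k E \<subseteq> U_fam 1 L k F" and l': "l' \<ge> l"
  shows "\<not> valid l'"
proof
  assume V: "valid l'"
  obtain K :: nat where K: "\<forall>N\<in>Mod. \<forall>g. inj_on g {..<K} \<longrightarrow> g ` {..<K} \<subseteq> verts N \<longrightarrow>
            \<not> (\<forall>i<K. \<forall>j<K. i \<noteq> j \<longrightarrow> [g i, g j] \<in> rels N E)"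
    using clique_bound[OF CU] by blast
  obtain m0 where m0: "\<forall>Q\<in>ramsey_patterns l L k. Q \<in> U_fam l L k F \<longrightarrow>
     (\<exists>M\<in>F. \<exists>f r. split_order l (verts M) f r \<and> uniform L k M Q f r \<and> card (verts M) \<le> m0)"
    using witness_bound[OF finite_patterns[OF finL]] by blast
  define m where "m = max (max m0 K) 2"
  obtain R where R: "\<forall>(N::'q struc) (e::nat \<Rightarrow> nat \<Rightarrow> nat).
     (\<exists>Q\<in>ramsey_patterns l L k. \<exists>\<sigma>. (\<forall>c<l. \<forall>s<m. \<sigma> c s < R) \<and>
        inj_on (\<lambda>q. \<sigma> (fst q) (snd q)) ({..<l} \<times> {..<m}) \<and>
        (\<forall>P\<in>L. \<forall>\<beta>\<in>gridtuples l m (k P).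
            map (\<lambda>q. e (fst q) (\<sigma> (fst q) (snd q))) \<beta> \<in> rels N P \<longleftrightarrow> gpull \<beta> \<in> Q P))"
    using ramsey_grid[OF lk, of l m] by blast
  define n where "n = R * l'"
  obtain N where NM: "N \<in> Mod" and ts: "turan_sub n l' (QAtom E [0,1]) N"
    using V by (auto simp: valid_def)
  obtain g where ginj: "inj_on g {..<n}" and gV: "g ` {..<n} \<subseteq> verts N"
    and gE: "\<And>i j. turan_edge n l' i j \<Longrightarrow> interp_edge (QAtom E [0,1]) N (g i) (g j)"
    using ts unfolding turan_sub_def by blast
  define e where "e c s = g (s * l' + c)" for c s
  obtain Q \<sigma> where QR: "Q \<in> ramsey_patterns l L k" and \<sigma>R: "\<forall>c<l. \<forall>s<m. \<sigma> c s < R"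
      and \<sigma>inj: "inj_on (\<lambda>q. \<sigma> (fst q) (snd q)) ({..<l} \<times> {..<m})"
      and gu: "\<forall>P\<in>L. \<forall>\<beta>\<in>gridtuples l m (k P).
            map (\<lambda>q. e (fst q) (\<sigma> (fst q) (snd q))) \<beta> \<in> rels N P \<longleftrightarrow> gpull \<beta> \<in> Q P"
    using spec[OF spec[OF R, of N], of e] by blast
  define \<iota> where "\<iota> q = \<sigma> (fst q) (snd q) * l' + fst q" for q :: "nat \<times> nat"
  define h where "h q = g (\<iota> q)" for q
  have hh: "(\<lambda>q. e (fst q) (\<sigma> (fst q) (snd q))) = h" by (rule ext) (simp add: h_def e_def \<iota>_def)
  have gu': "\<forall>P\<in>L. \<forall>\<beta>\<in>gridtuples l m (k P). map h \<beta> \<in> rels N P \<longleftrightarrow> gpull \<beta> \<in> Q P"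
    using gu unfolding hh .
  have gE2: "\<forall>\<beta>\<in>gridtuples l m 2. map h \<beta> \<in> rels N E \<longleftrightarrow> gpull \<beta> \<in> Q E"
    using bspec[OF gu' EL] kE by simp
  have \<sigma>R': "\<And>q. q \<in> {..<l} \<times> {..<m} \<Longrightarrow> \<sigma> (fst q) (snd q) < R" using \<sigma>R by auto
  have fl: "\<And>q. q \<in> {..<l} \<times> {..<m} \<Longrightarrow> fst q < l'" using l' by auto
  have \<iota>n: "\<iota> q < n" if "q \<in> {..<l} \<times> {..<m}" for q
    unfolding \<iota>_def n_def using grid_idx_lt[OF \<sigma>R'[OF that] fl[OF that]] .
  have \<iota>mod: "\<iota> q mod l' = fst q" if "q \<in> {..<l} \<times> {..<m}" for q
    unfolding \<iota>_def using fl[OF that] by simp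
  have \<iota>inj: "inj_on \<iota> ({..<l} \<times> {..<m})"
  proof (rule inj_onI)
    fix q q' assume q: "q \<in> {..<l} \<times> {..<m}" "q' \<in> {..<l} \<times> {..<m}" "\<iota> q = \<iota> q'"
    then have "\<sigma> (fst q) (snd q) = \<sigma> (fst q') (snd q') \<and> fst q = fst q'"
      using divmod_inj[OF fl[OF q(1)] fl[OF q(2)]] by (simp add: \<iota>_def)
    then have e1: "\<sigma> (fst q) (snd q) = \<sigma> (fst q') (snd q')" by (rule conjunct1)
    show "q = q'" by (rule inj_onD[OF \<sigma>inj _ q(1) q(2)]) (simp add: e1)
  qed
  have hinj: "inj_on h ({..<l} \<times> {..<m})"
  proof (rule inj_onI)
    fix q q' assume q: "q \<in> {..<l} \<times> {..<m}" "q' \<in> {..<l} \<times> {..<m}" "h q = h q'"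
    then have "\<iota> q = \<iota> q'" using inj_onD[OF ginj _] \<iota>n[OF q(1)] \<iota>n[OF q(2)] by (simp add: h_def)
    then show "q = q'" using inj_onD[OF \<iota>inj _ q(1) q(2)] by simp
  qed
  have hV: "h ` ({..<l} \<times> {..<m}) \<subseteq> verts N" using gV \<iota>n by (force simp: h_def)
  have cross: "[h q, h q'] \<in> rels N E"
    if "q \<in> {..<l} \<times> {..<m}" "q' \<in> {..<l} \<times> {..<m}" "fst q \<noteq> fst q'" for q q'
  proof -
    have "turan_edge n l' (\<iota> q) (\<iota> q')"
      using \<iota>n[OF that(1)] \<iota>n[OF that(2)] \<iota>mod[OF that(1)] \<iota>mod[OF that(2)] that(3)
      by (simp add: turan_edge_def)
    then have "interp_edge (QAtom E [0,1]) N (g (\<iota> q)) (g (\<iota> q'))" by (rule gE)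
    then have "[g (\<iota> q), g (\<iota> q')] \<in> rels N E" unfolding ie by simp
    then show ?thesis by (simp add: h_def)
  qed
  show False
  proof (cases "\<exists>q q'. q \<in> {..<l} \<times> {..<m} \<and> q' \<in> {..<l} \<times> {..<m} \<and> fst q = fst q' \<and> q \<noteq> q' \<and> [h q, h q'] \<in> rels N E")
    case True
    then obtain q q' where q: "q \<in> {..<l} \<times> {..<m}" "q' \<in> {..<l} \<times> {..<m}" "fst q = fst q'" "q \<noteq> q'"
      "[h q, h q'] \<in> rels N E" by blast
    define c where "c = fst q"
    have symq: "[h q', h q] \<in> rels N E" using sym NM q(5) by blast
    have sq: "snd q \<noteq> snd q'" using q(3,4) by (auto simp: prod_eq_iff)
    have cK: "c < l" using q(1) by (auto simp: c_def)
    have cl: "[h (c,s), h (c,s')] \<in> rels N E" if s: "s < m" "s' < m" "s \<noteq> s'" for s s'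
    proof -
      define \<beta> :: "(nat\<times>nat) list" where "\<beta> = [(c,s),(c,s')]"
      have \<beta>g: "\<beta> \<in> gridtuples l m 2" using s cK by (auto simp: \<beta>_def gridtuples_def)
      have g1: "[q,q'] \<in> gridtuples l m 2" using q by (auto simp: gridtuples_def)
      have g2: "[q',q] \<in> gridtuples l m 2" using q by (auto simp: gridtuples_def)
      show ?thesis
      proof (cases "snd q \<le> snd q' \<longleftrightarrow> s \<le> s'")
        case True
        have "gpull \<beta> = gpull [q,q']"
          by (rule S2_eq'[OF gpull_S[OF \<beta>g] gpull_S[OF g1]])
             (use True q(3) sq s in \<open>auto simp: gpull_def \<beta>_def c_def\<close>)
        moreover have "map h \<beta> \<in> rels N E \<longleftrightarrow> gpull \<beta> \<in> Q E" using gE2 \<beta>g by blast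
        moreover have "map h [q,q'] \<in> rels N E \<longleftrightarrow> gpull [q,q'] \<in> Q E" using gE2 g1 by blast
        ultimately have "map h \<beta> \<in> rels N E \<longleftrightarrow> map h [q,q'] \<in> rels N E" by simp
        then show ?thesis using q(5) by (simp add: \<beta>_def)
      next
        case False
        have "gpull \<beta> = gpull [q',q]"
          by (rule S2_eq'[OF gpull_S[OF \<beta>g] gpull_S[OF g2]])
             (use False q(3) sq s in \<open>auto simp: gpull_def \<beta>_def c_def\<close>)
        moreover have "map h \<beta> \<in> rels N E \<longleftrightarrow> gpull \<beta> \<in> Q E" using gE2 \<beta>g by blast
        moreover have "map h [q',q] \<in> rels N E \<longleftrightarrow> gpull [q',q] \<in> Q E" using gE2 g2 by blast
        ultimately have "map h \<beta> \<in> rels N E \<longleftrightarrow> map h [q',q] \<in> rels N E" by simp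
        then show ?thesis using symq by (simp add: \<beta>_def)
      qed
    qed
    have i1: "inj_on (\<lambda>s. h (c,s)) {..<K}"
    proof (rule inj_onI)
      fix s s' assume ss: "s \<in> {..<K}" "s' \<in> {..<K}" "h (c,s) = h (c,s')"
      have "(c,s) \<in> {..<l} \<times> {..<m}" "(c,s') \<in> {..<l} \<times> {..<m}" using cK ss by (auto simp: m_def)
      then have "(c,s) = (c,s')" using inj_onD[OF hinj ss(3)] by blast
      then show "s = s'" by simp
    qed
    have i2: "(\<lambda>s. h (c,s)) ` {..<K} \<subseteq> verts N"
    proof
      fix x assume "x \<in> (\<lambda>s. h (c,s)) ` {..<K}"
      then obtain s where s: "s < K" "x = h (c,s)" by auto
      then have "(c,s) \<in> {..<l} \<times> {..<m}" using cK by (auto simp: m_def)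
      then show "x \<in> verts N" using hV s by blast
    qed
    have i3: "\<forall>i<K. \<forall>j<K. i \<noteq> j \<longrightarrow> [(\<lambda>s. h (c,s)) i, (\<lambda>s. h (c,s)) j] \<in> rels N E"
      using cl by (simp add: m_def)
    show False using K NM i1 i2 i3 by blast
  next
    case False
    then have noin: "\<And>q q'. q \<in> {..<l} \<times> {..<m} \<Longrightarrow> q' \<in> {..<l} \<times> {..<m} \<Longrightarrow> fst q = fst q' \<Longrightarrow>
        q \<noteq> q' \<Longrightarrow> [h q, h q'] \<notin> rels N E"
      by blast
    have QES: "Q E \<subseteq> S l 2"
    proof -
      have "Q E \<subseteq> S l (k E)" using QR EL by (simp add: ramsey_patterns_def)
      then show ?thesis using kE by simp
    qed
    have QT: "Q \<in> turan_patterns l L k E"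
    proof -
      have "Q E = {(g, r) \<in> S l 2. inj_on g {..<2}}"
      proof (intro equalityI subsetI)
        fix \<tau> assume \<tau>: "\<tau> \<in> Q E"
        have \<tau>S: "\<tau> \<in> S l 2" using QES \<tau> by blast
        obtain \<beta> where \<beta>: "\<beta> \<in> gridtuples l m 2" "gpull \<beta> = \<tau>"
          using real2[OF \<tau>S, of m] by (auto simp: m_def)
        have "length \<beta> = 2" using \<beta>(1) by (simp add: gridtuples_def)
        then obtain a b where ab: "\<beta> = [a,b]" using len2 by blast
        have abg: "a \<in> {..<l} \<times> {..<m}" "b \<in> {..<l} \<times> {..<m}" "a \<noteq> b"
          using \<beta>(1) ab by (auto simp: gridtuples_def)
        have "map h \<beta> \<in> rels N E" using gE2 \<beta> \<tau> by simp
        then have "fst a \<noteq> fst b" using noin[OF abg(1,2) _ abg(3)] ab by auto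
        then have "fst (gpull \<beta>) 0 \<noteq> fst (gpull \<beta>) 1" by (simp add: ab gpull_def)
        then have "inj_on (fst \<tau>) {..<2}" unfolding inj2_iff using \<beta>(2) by simp
        then show "\<tau> \<in> {(g, r) \<in> S l 2. inj_on g {..<2}}" using \<tau>S by (cases \<tau>) auto
      next
        fix \<tau> assume \<tau>: "\<tau> \<in> {(g, r) \<in> S l 2. inj_on g {..<2}}"
        have \<tau>S: "\<tau> \<in> S l 2" and inj: "inj_on (fst \<tau>) {..<2}" using \<tau> by (cases \<tau>, auto)+
        obtain \<beta> where \<beta>: "\<beta> \<in> gridtuples l m 2" "gpull \<beta> = \<tau>"
          using real2[OF \<tau>S, of m] by (auto simp: m_def)
        have "length \<beta> = 2" using \<beta>(1) by (simp add: gridtuples_def)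
        then obtain a b where ab: "\<beta> = [a,b]" using len2 by blast
        have abg: "a \<in> {..<l} \<times> {..<m}" "b \<in> {..<l} \<times> {..<m}" "a \<noteq> b"
          using \<beta>(1) ab by (auto simp: gridtuples_def)
        have "fst (gpull \<beta>) 0 \<noteq> fst (gpull \<beta>) 1" using inj \<beta>(2) unfolding inj2_iff by simp
        then have "fst a \<noteq> fst b" by (simp add: ab gpull_def)
        then have "[h a, h b] \<in> rels N E" using cross abg by blast
        then have "map h \<beta> \<in> rels N E" using ab by simp
        then show "\<tau> \<in> Q E" using gE2 \<beta>(1) \<beta>(2) by blast
      qed
      then show ?thesis using QR by (simp add: turan_patterns_def)
    qed
    then obtain M f r where M: "M \<in> F" "split_order l (verts M) f r" "uniform L k M Q f r" "card (verts M) \<le> m0"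
      using m0 QR TU by blast
    have "\<exists>U\<subseteq>verts N. iso (induced N U) M"
      by (rule embed[OF Mod_canonical[OF NM] _ M(2,3) _ hinj hV gu']) (use M FG in \<open>auto simp: m_def\<close>)
    then show False using Mod_no_iso[OF NM] M(1) by blast
  qed
qed

theorem core_main:
  shows "(\<not> complete_patterns L k E \<subseteq> U_fam 1 L k F \<longrightarrow> chi Mod (QAtom E [0, 1]) = \<infinity>) \<and>
         (complete_patterns L k E \<subseteq> U_fam 1 L k F \<longrightarrow>
            (\<exists>l\<ge>1. turan_patterns l L k E \<subseteq> U_fam l L k F) \<and>
            chi Mod (QAtom E [0, 1]) = enat (LEAST l. l \<ge> 1 \<and> turan_patterns l L k E \<subseteq> U_fam l L k F))"
proof -
  have chi_eq: "chi Mod (QAtom E [0,1]) = Sup (enat ` {l. valid l} \<union> {0}) + 1"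
    by (simp add: chi_def valid_def)
  show ?thesis
  proof (intro conjI impI)
    assume nC: "\<not> complete_patterns L k E \<subseteq> U_fam 1 L k F"
    then obtain Q where Q: "Q \<in> complete_patterns L k E" "Q \<notin> U_fam 1 L k F" by blast
    have Vs: "{l. valid l} = {l. l \<ge> 1}" using valid_complete[OF _ Q] by (auto simp: valid_def)
    have inf1: "infinite {l::nat. l \<ge> 1}"
      unfolding infinite_nat_iff_unbounded_le
    proof (intro allI)
      fix m :: nat show "\<exists>n\<ge>m. n \<in> {l. l \<ge> 1}" by (rule exI[of _ "Suc m"]) simp
    qed
    have "infinite (enat ` {l. valid l} \<union> {0})"
    proof
      assume "finite (enat ` {l. valid l} \<union> {0})"
      then have "finite (enat ` {l. valid l})" by simp
      then have "finite {l. valid l}" by (rule finite_imageD) (simp add: inj_on_def)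
      then show False using inf1 Vs by simp
    qed
    then have "Sup (enat ` {l. valid l} \<union> {0}) = \<infinity>" unfolding Sup_enat_def by auto
    then show "chi Mod (QAtom E [0, 1]) = \<infinity>" using chi_eq by simp
  next
    assume CU: "complete_patterns L k E \<subseteq> U_fam 1 L k F"
    show ex: "\<exists>l\<ge>1. turan_patterns l L k E \<subseteq> U_fam l L k F"
    proof (rule ccontr)
      assume nex: "\<not> (\<exists>l\<ge>1. turan_patterns l L k E \<subseteq> U_fam l L k F)"
      obtain K :: nat where K: "\<forall>N\<in>Mod. \<forall>g. inj_on g {..<K} \<longrightarrow> g ` {..<K} \<subseteq> verts N \<longrightarrow>
            \<not> (\<forall>i<K. \<forall>j<K. i \<noteq> j \<longrightarrow> [g i, g j] \<in> rels N E)"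
        using clique_bound[OF CU] by blast
      define l where "l = max K 1"
      have l1: "l \<ge> 1" by (simp add: l_def)
      have "\<not> turan_patterns l L k E \<subseteq> U_fam l L k F" using nex l1 by blast
      then obtain Q where "Q \<in> turan_patterns l L k E" "Q \<notin> U_fam l L k F" by blast
      then have "valid l" using valid_turan[OF l1] by blast
      then obtain N where NM: "N \<in> Mod" and ts: "turan_sub l l (QAtom E [0,1]) N"
        by (auto simp: valid_def)
      obtain g where ginj: "inj_on g {..<l}" and gV: "g ` {..<l} \<subseteq> verts N"
        and gE: "\<And>i j. turan_edge l l i j \<Longrightarrow> interp_edge (QAtom E [0,1]) N (g i) (g j)"
        using ts unfolding turan_sub_def by blast
      have Kl: "K \<le> l" by (simp add: l_def)
      have "inj_on g {..<K}" by (rule inj_on_subset[OF ginj]) (use Kl in auto)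
      moreover have "g ` {..<K} \<subseteq> verts N" using gV Kl by auto
      moreover have "\<forall>i<K. \<forall>j<K. i \<noteq> j \<longrightarrow> [g i, g j] \<in> rels N E"
      proof (intro allI impI)
        fix i j assume "i < K" "j < K" "i \<noteq> j"
        then have "turan_edge l l i j" using Kl by (simp add: turan_edge_def)
        then have "interp_edge (QAtom E [0,1]) N (g i) (g j)" by (rule gE)
        then show "[g i, g j] \<in> rels N E" unfolding ie by simp
      qed
      ultimately show False using K NM by blast
    qed
    define l0 where "l0 = (LEAST l. l \<ge> 1 \<and> turan_patterns l L k E \<subseteq> U_fam l L k F)"
    have l0: "l0 \<ge> 1" "turan_patterns l0 L k E \<subseteq> U_fam l0 L k F"
      using LeastI_ex[OF ex] unfolding l0_def by auto
    have less: "\<not> turan_patterns l L k E \<subseteq> U_fam l L k F" if "1 \<le> l" "l < l0" for l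
      using not_less_Least[of l "\<lambda>l. l \<ge> 1 \<and> turan_patterns l L k E \<subseteq> U_fam l L k F"] that
      unfolding l0_def by auto
    have Vs: "{l. valid l} = {l. 1 \<le> l \<and> l < l0}"
    proof (intro equalityI subsetI)
      fix l assume "l \<in> {l. valid l}"
      then have v: "valid l" by simp
      then have "l \<ge> 1" by (simp add: valid_def)
      moreover have "l < l0"
      proof (rule ccontr)
        assume "\<not> l < l0" then have "l \<ge> l0" by simp
        then show False using turan_bound[OF l0(1) l0(2) CU] v by blast
      qed
      ultimately show "l \<in> {l. 1 \<le> l \<and> l < l0}" by simp
    next
      fix l assume "l \<in> {l. 1 \<le> l \<and> l < l0}"
      then have l: "1 \<le> l" "l < l0" by auto
      then obtain Q where "Q \<in> turan_patterns l L k E" "Q \<notin> U_fam l L k F" using less by blast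
      then show "l \<in> {l. valid l}" using valid_turan l(1) by blast
    qed
    have set_eq: "enat ` {l. 1 \<le> l \<and> l < l0} \<union> {0} = enat ` {..<l0}"
    proof (intro equalityI subsetI)
      fix x assume "x \<in> enat ` {l. 1 \<le> l \<and> l < l0} \<union> {0}"
      then show "x \<in> enat ` {..<l0}" using l0(1) by (auto simp: zero_enat_def)
    next
      fix x assume "x \<in> enat ` {..<l0}"
      then obtain i where i: "i < l0" "x = enat i" by auto
      show "x \<in> enat ` {l. 1 \<le> l \<and> l < l0} \<union> {0}"
      proof (cases "i = 0")
        case True then show ?thesis using i by (simp add: zero_enat_def)
      next
        case False then show ?thesis using i by auto
      qed
    qed
    have Max_eq: "Max (enat ` {..<l0}) = enat (l0 - 1)"
      by (rule Max_eqI) (use l0(1) in auto)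
    have "Sup (enat ` {l. valid l} \<union> {0}) = enat (l0 - 1)"
    proof -
      have "enat 0 \<in> enat ` {..<l0}" using l0(1) by simp
      then have ne: "enat ` {..<l0} \<noteq> {}" by blast
      show ?thesis unfolding Vs set_eq Sup_enat_def using Max_eq ne by simp
    qed
    then show "chi Mod (QAtom E [0, 1]) = enat (LEAST l. l \<ge> 1 \<and> turan_patterns l L k E \<subseteq> U_fam l L k F)"
      unfolding chi_eq l0_def[symmetric] using l0(1) by (simp add: one_enat_def)
  qed
qed

end


definition expand :: "'p qf \<Rightarrow> 'p struc \<Rightarrow> 'p option struc" where
  "expand \<phi> N = \<lparr>verts = verts N, rels = (\<lambda>p. case p of
      None \<Rightarrow> {[x,y] | x y. x \<in> verts N \<and> y \<in> verts N \<and> x \<noteq> y \<and> qf_sat N (asg x y) \<phi>}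
    | Some P \<Rightarrow> rels N P)\<rparr>"

lemma reduct_expand: "reduct (expand \<phi> N) = N"
  by (cases N) (simp add: reduct_def expand_def)

lemma expand_in:
  assumes CT: "canon_theory L k Mod" and OI: "open_interp L k Mod \<phi>" and N: "N \<in> Mod"
  shows "expand \<phi> N \<in> Tprime_models L k Mod \<phi>"
proof -
  have NC: "canonical L k N" using CT N by (simp add: canon_theory_def)
  have sy: "\<forall>x\<in>verts N. \<forall>y\<in>verts N. qf_sat N (asg x y) \<phi> \<longleftrightarrow> qf_sat N (asg y x) \<phi>"
    and irr: "\<forall>x\<in>verts N. \<not> qf_sat N (asg x x) \<phi>"
    using OI N by (auto simp: open_interp_def)
  have can: "canonical (lang' L) (arity' k) (expand \<phi> N)"
    unfolding canonical_def
  proof (intro conjI ballI allI impI)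
    show "finite (verts (expand \<phi> N))" using NC by (simp add: expand_def canonical_def)
  next
    fix p assume p: "p \<in> lang' L"
    show "rels (expand \<phi> N) p \<subseteq> inj_tuples (verts (expand \<phi> N)) (arity' k p)"
    proof (cases p)
      case None then show ?thesis by (auto simp: expand_def inj_tuples_def arity'_def)
    next
      case (Some P) with p have "P \<in> L" by (auto simp: lang'_def)
      then show ?thesis using NC Some by (simp add: expand_def canonical_def arity'_def)
    qed
  next
    fix p assume "p \<notin> lang' L"
    then obtain P where "p = Some P" "P \<notin> L" by (cases p) (auto simp: lang'_def)
    then show "rels (expand \<phi> N) p = {}" using NC by (simp add: expand_def canonical_def)
  qed
  have red: "reduct (expand \<phi> N) \<in> Mod" using N by (simp add: reduct_expand)
  have sym': "\<forall>x y. [x,y] \<in> rels (expand \<phi> N) None \<longrightarrow> [y,x] \<in> rels (expand \<phi> N) None"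
    using sy by (auto simp: expand_def)
  have ax: "\<forall>x\<in>verts (expand \<phi> N). \<forall>y\<in>verts (expand \<phi> N).
     [x, y] \<in> rels (expand \<phi> N) None \<longleftrightarrow> qf_sat (reduct (expand \<phi> N)) (asg x y) \<phi>"
    unfolding reduct_expand using irr by (auto simp: expand_def)
  show ?thesis unfolding Tprime_models_def using can red sym' ax by blast
qed

lemma turan_sub_cong:
  "verts N1 = verts N2 \<Longrightarrow> (\<And>x y. interp_edge \<phi>1 N1 x y \<longleftrightarrow> interp_edge \<phi>2 N2 x y) \<Longrightarrow>
   turan_sub n l \<phi>1 N1 \<longleftrightarrow> turan_sub n l \<phi>2 N2"
  by (simp add: turan_sub_def)

lemma chi_transfer:
  assumes CT: "canon_theory L k Mod" and OI: "open_interp L k Mod \<phi>"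
  shows "chi Mod \<phi> = chi (Tprime_models L k Mod \<phi>) (QAtom None [0,1])"
proof -
  have ie1: "interp_edge (QAtom None [0,1]) N' x y \<longleftrightarrow> interp_edge \<phi> (reduct N') x y"
    if "N' \<in> Tprime_models L k Mod \<phi>" for N' x y
  proof -
    have "x \<in> verts N' \<Longrightarrow> y \<in> verts N' \<Longrightarrow> [x, y] \<in> rels N' None \<longleftrightarrow> qf_sat (reduct N') (asg x y) \<phi>"
      using that by (simp add: Tprime_models_def)
    moreover have "verts (reduct N') = verts N'" by (simp add: reduct_def)
    ultimately show ?thesis by (auto simp: interp_edge_def asg_def)
  qed
  have ie2: "interp_edge (QAtom None [0,1]) (expand \<phi> N) x y \<longleftrightarrow> interp_edge \<phi> N x y" for N x y
    by (auto simp: interp_edge_def expand_def asg_def)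
  have eq: "(\<exists>N\<in>Mod. card (verts N) = n \<and> turan_sub n l \<phi> N) \<longleftrightarrow>
     (\<exists>N'\<in>Tprime_models L k Mod \<phi>. card (verts N') = n \<and> turan_sub n l (QAtom None [0,1]) N')" for n l
  proof
    assume "\<exists>N\<in>Mod. card (verts N) = n \<and> turan_sub n l \<phi> N"
    then obtain N where N: "N \<in> Mod" "card (verts N) = n" "turan_sub n l \<phi> N" by blast
    have "turan_sub n l (QAtom None [0,1]) (expand \<phi> N)"
      using N(3) turan_sub_cong[of "expand \<phi> N" N "QAtom None [0,1]" \<phi> n l] ie2
      by (simp add: expand_def)
    moreover have "card (verts (expand \<phi> N)) = n" using N(2) by (simp add: expand_def)
    ultimately show "\<exists>N'\<in>Tprime_models L k Mod \<phi>. card (verts N') = n \<and> turan_sub n l (QAtom None [0,1]) N'"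
      using expand_in[OF CT OI N(1)] by blast
  next
    assume "\<exists>N'\<in>Tprime_models L k Mod \<phi>. card (verts N') = n \<and> turan_sub n l (QAtom None [0,1]) N'"
    then obtain N' where N': "N' \<in> Tprime_models L k Mod \<phi>" "card (verts N') = n"
      "turan_sub n l (QAtom None [0,1]) N'" by blast
    have vr: "verts (reduct N') = verts N'" by (simp add: reduct_def)
    have "turan_sub n l \<phi> (reduct N')"
      using N'(3) turan_sub_cong[of N' "reduct N'" "QAtom None [0,1]" \<phi> n l] ie1[OF N'(1)] vr
      by simp
    moreover have "reduct N' \<in> Mod" using N'(1) by (simp add: Tprime_models_def)
    ultimately show "\<exists>N\<in>Mod. card (verts N) = n \<and> turan_sub n l \<phi> N" using N'(2) vr by metis
  qed
  show ?thesis unfolding chi_def using eq by simp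
qed

lemma part1:
  assumes H: "canon_theory L k Mod \<and> open_interp L k Mod \<phi> \<and>
            (\<forall>G\<in>F. canonical (lang' L) (arity' k) G) \<and>
            Tprime_models L k Mod \<phi> = Forb (lang' L) (arity' k) F"
  shows "(\<not> complete_patterns (lang' L) (arity' k) None \<subseteq> U_fam 1 (lang' L) (arity' k) F \<longrightarrow>
                 chi Mod \<phi> = \<infinity>) \<and>
              (complete_patterns (lang' L) (arity' k) None \<subseteq> U_fam 1 (lang' L) (arity' k) F \<longrightarrow>
                 (\<exists>l\<ge>1. turan_patterns l (lang' L) (arity' k) None \<subseteq> U_fam l (lang' L) (arity' k) F) \<and>
                 chi Mod \<phi> = enat (LEAST l. l \<ge> 1 \<and>
                    turan_patterns l (lang' L) (arity' k) None \<subseteq> U_fam l (lang' L) (arity' k) F))"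
proof -
  have CT: "canon_theory L k Mod" and OI: "open_interp L k Mod \<phi>"
    and FG: "\<forall>G\<in>F. canonical (lang' L) (arity' k) G" and TF: "Tprime_models L k Mod \<phi> = Forb (lang' L) (arity' k) F"
    using H by auto
  have lk: "lang_ok L k" using CT by (simp add: canon_theory_def)
  interpret c: core "lang' L" "arity' k" None F "Tprime_models L k Mod \<phi>"
  proof
    show "lang_ok (lang' L) (arity' k)" using lk by (auto simp: lang_ok_def lang'_def arity'_def)
    show "None \<in> lang' L" by (simp add: lang'_def)
    show "arity' k None = 2" by (simp add: arity'_def)
    show "\<forall>N\<in>Tprime_models L k Mod \<phi>. \<forall>x y. [x, y] \<in> rels N None \<longrightarrow> [y, x] \<in> rels N None"
      by (simp add: Tprime_models_def)
    show "\<forall>G\<in>F. canonical (lang' L) (arity' k) G" by (rule FG)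
    show "Tprime_models L k Mod \<phi> = Forb (lang' L) (arity' k) F" by (rule TF)
  qed
  show ?thesis using c.core_main chi_transfer[OF CT OI] by simp
qed

lemma part2:
  assumes H: "canon_theory L k Mod \<and> E \<in> L \<and> k E = 2 \<and>
            (\<forall>N\<in>Mod. \<forall>x y. [x, y] \<in> rels N E \<longrightarrow> [y, x] \<in> rels N E) \<and>
            (\<forall>G\<in>F. canonical L k G) \<and>
            Mod = Forb L k F"
  shows "(\<not> complete_patterns L k E \<subseteq> U_fam 1 L k F \<longrightarrow>
                 chi Mod (QAtom E [0, 1]) = \<infinity>) \<and>
              (complete_patterns L k E \<subseteq> U_fam 1 L k F \<longrightarrow>
                 (\<exists>l\<ge>1. turan_patterns l L k E \<subseteq> U_fam l L k F) \<and>
                 chi Mod (QAtom E [0, 1]) = enat (LEAST l. l \<ge> 1 \<and> turan_patterns l L k E \<subseteq> U_fam l L k F))"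
proof -
  interpret c: core L k E F Mod
  proof
    show "lang_ok L k" using H by (simp add: canon_theory_def)
  qed (use H in auto)
  show ?thesis by (rule c.core_main)
qed

theorem theorem3p2:
  shows "(\<forall>(L :: 'p set) k Mod \<phi> (F :: 'p option struc set).
            canon_theory L k Mod \<and> open_interp L k Mod \<phi> \<and>
            (\<forall>G\<in>F. canonical (lang' L) (arity' k) G) \<and>
            Tprime_models L k Mod \<phi> = Forb (lang' L) (arity' k) F \<longrightarrow>
              (\<not> complete_patterns (lang' L) (arity' k) None \<subseteq> U_fam 1 (lang' L) (arity' k) F \<longrightarrow>
                 chi Mod \<phi> = \<infinity>) \<and>
              (complete_patterns (lang' L) (arity' k) None \<subseteq> U_fam 1 (lang' L) (arity' k) F \<longrightarrow>
                 (\<exists>l\<ge>1. turan_patterns l (lang' L) (arity' k) None \<subseteq> U_fam l (lang' L) (arity' k) F) \<and>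
                 chi Mod \<phi> = enat (LEAST l. l \<ge> 1 \<and>
                    turan_patterns l (lang' L) (arity' k) None \<subseteq> U_fam l (lang' L) (arity' k) F)))
       \<and>
       (\<forall>(L :: 'q set) k Mod (E :: 'q) (F :: 'q struc set).
            canon_theory L k Mod \<and> E \<in> L \<and> k E = 2 \<and>
            (\<forall>N\<in>Mod. \<forall>x y. [x, y] \<in> rels N E \<longrightarrow> [y, x] \<in> rels N E) \<and>
            (\<forall>G\<in>F. canonical L k G) \<and>
            Mod = Forb L k F \<longrightarrow>
              (\<not> complete_patterns L k E \<subseteq> U_fam 1 L k F \<longrightarrow>
                 chi Mod (QAtom E [0, 1]) = \<infinity>) \<and>
              (complete_patterns L k E \<subseteq> U_fam 1 L k F \<longrightarrow>
                 (\<exists>l\<ge>1. turan_patterns l L k E \<subseteq> U_fam l L k F) \<and>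
                 chi Mod (QAtom E [0, 1]) = enat (LEAST l. l \<ge> 1 \<and> turan_patterns l L k E \<subseteq> U_fam l L k F)))"
  apply (rule conjI)
   apply (intro allI impI)
   apply (erule part1)
  apply (intro allI impI)
  apply (erule part2)
  done

end
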